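(* Let $\mathcal{C}$ be a finite class of pairwise disjoint nonempty subsets of $\mathcal{V}$, let $\nu$ be the uniform prior on $\mathcal{C}$, let $\Phi$ be a parameter set carrying a probability measure $\pi$, and let $\{\Gamma(\phi):\phi\in\Phi\}$ be a family of covariance matrices indexed by $\mathcal{V}$ such that every principal submatrix $\Gamma_S(\phi)$ is nonsingular. Then \[ \bar R^*_{\nu,\pi}\;\ge\;1-\frac{1}{2|\mathcal{C}|}\Big(\sum_{S\in\mathcal{C}}V_S\Big)^{1/2}, \qquad V_S:=\mathbb{E}_{\pi}\left[\left(\frac{\det(\Gamma_S^{-1}(\phi_1))\det(\Gamma_S^{-1}(\phi_2))}{\det\big(\Gamma_S^{-1}(\phi_1)+\Gamma_S^{-1}(\phi_2)-I_S\big)}\right)^{1/2}\right], \] where $\phi_1,\phi_2$ are drawn i.i.d. from $\pi$. (If $\Gamma_S^{-1}(\phi_1)+\Gamma_S^{-1}(\phi_2)-I_S$ fails to be positive definite with positive $\pi\otimes\pi$-probability, $V_S$ is interpreted as $+\infty$ and the bound is trivial.)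
   Context: Testing setting: $\mathcal{V}=\{1,\dots,m\}^d$. One observes $X=(X_i)_{i\in\mathcal V}$. Under $\mathbb{P}_0$ the $X_i$ are i.i.d. $N(0,1)$. For $S\subset\mathcal V$ and a covariance matrix $\Gamma$, under $\mathbb{P}_{S,\Gamma}$ the vector $X_S=(X_i)_{i\in S}$ is $N(0,\Gamma_S)$ (with $\Gamma_S$ the principal submatrix indexed by $S$), independent of $(X_i)_{i\notin S}$, which are i.i.d. $N(0,1)$. A test is a measurable $f:\mathbb{R}^{\mathcal V}\to\{0,1\}$. For a prior $\nu$ on $\mathcal C$ and a prior $\pi$ on $\Phi$, the Bayes risk is $\bar R^*_{\nu,\pi}=\inf_f\Big[\mathbb{P}_0\{f(X)=1\}+\sum_{S\in\mathcal C}\nu(S)\int\mathbb{P}_{S,\Gamma(\phi)}\{f(X)=0\}\,\pi(d\phi)\Big]$, the infimum over all tests. $I_S$ is the identity matrix indexed by $S$. *)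

theory Defs
  imports "HOL-Probability.Probability"
begin

text \<open>The index set V = {1..m}^d, vertices represented as lists of length d.\<close>
definition grid :: "nat \<Rightarrow> nat \<Rightarrow> nat list set" where
  "grid m d = {v. length v = d \<and> set v \<subseteq> {1..m}}"

definition det_on :: "'a set \<Rightarrow> ('a \<Rightarrow> 'a \<Rightarrow> real) \<Rightarrow> real" where
  "det_on S A = (\<Sum>p | p permutes S. of_int (sign p) * (\<Prod>i\<in>S. A i (p i)))"

definition inv_on :: "'a set \<Rightarrow> ('a \<Rightarrow> 'a \<Rightarrow> real) \<Rightarrow> ('a \<Rightarrow> 'a \<Rightarrow> real)" where
  "inv_on S A = (SOME B. (\<forall>i\<in>S. \<forall>j\<in>S. (\<Sum>k\<in>S. B i k * A k j) = (if i = j then 1 else 0))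
                        \<and> (\<forall>i j. i \<notin> S \<or> j \<notin> S \<longrightarrow> B i j = 0))"

definition pos_def_on :: "'a set \<Rightarrow> ('a \<Rightarrow> 'a \<Rightarrow> real) \<Rightarrow> bool" where
  "pos_def_on S A = (\<forall>x. (\<exists>i\<in>S. x i \<noteq> 0) \<longrightarrow> 0 < (\<Sum>i\<in>S. \<Sum>j\<in>S. x i * A i j * x j))"

definition covariance_matrix :: "'a set \<Rightarrow> ('a \<Rightarrow> 'a \<Rightarrow> real) \<Rightarrow> bool" where
  "covariance_matrix V A = ((\<forall>i\<in>V. \<forall>j\<in>V. A i j = A j i) \<and>
      (\<forall>x. 0 \<le> (\<Sum>i\<in>V. \<Sum>j\<in>V. x i * A i j * x j)))"

definition gauss_density :: "'a set \<Rightarrow> ('a \<Rightarrow> 'a \<Rightarrow> real) \<Rightarrow> ('a \<Rightarrow> real) \<Rightarrow> real" where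
  "gauss_density S A x =
     exp (- (1/2) * (\<Sum>i\<in>S. \<Sum>j\<in>S. x i * inv_on S A i j * x j))
     / sqrt ((2 * pi) ^ card S * det_on S A)"

definition null_law :: "'a set \<Rightarrow> ('a \<Rightarrow> real) measure" where
  "null_law V = density (PiM V (\<lambda>_. lborel)) (\<lambda>x. ennreal (\<Prod>i\<in>V. std_normal_density (x i)))"

definition alt_law :: "'a set \<Rightarrow> 'a set \<Rightarrow> ('a \<Rightarrow> 'a \<Rightarrow> real) \<Rightarrow> ('a \<Rightarrow> real) measure" where
  "alt_law V S A = density (PiM V (\<lambda>_. lborel))
      (\<lambda>x. ennreal (gauss_density S A x * (\<Prod>i\<in>V - S. std_normal_density (x i))))"

text \<open>Tests: measurable maps into {0,1}, encoded as bool (True = 1 = reject).\<close>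
definition tests :: "'a set \<Rightarrow> (('a \<Rightarrow> real) \<Rightarrow> bool) set" where
  "tests V = {f. f \<in> measurable (PiM V (\<lambda>_. lborel)) (count_space UNIV)}"

definition bayes_risk :: "'a set \<Rightarrow> 'a set set \<Rightarrow> 'p measure \<Rightarrow> ('p \<Rightarrow> 'a \<Rightarrow> 'a \<Rightarrow> real) \<Rightarrow> ennreal" where
  "bayes_risk V C \<pi> \<Gamma> = (INF f \<in> tests V.
      emeasure (null_law V) {x \<in> space (null_law V). f x}
      + (\<Sum>S\<in>C. ennreal (1 / real (card C)) *
           (\<integral>\<^sup>+ \<phi>. emeasure (alt_law V S (\<Gamma> \<phi>)) {x \<in> space (alt_law V S (\<Gamma> \<phi>)). \<not> f x} \<partial>\<pi>)))"

definition V_term :: "'a set \<Rightarrow> 'p measure \<Rightarrow> ('p \<Rightarrow> 'a \<Rightarrow> 'a \<Rightarrow> real) \<Rightarrow> ennreal" where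
  "V_term S \<pi> \<Gamma> = (\<integral>\<^sup>+ z.
      (let B1 = inv_on S (\<Gamma> (fst z)); B2 = inv_on S (\<Gamma> (snd z));
           Q = (\<lambda>i j. B1 i j + B2 i j - (if i = j then 1 else 0))
       in if pos_def_on S Q then ennreal (sqrt (det_on S B1 * det_on S B2 / det_on S Q)) else \<infinity>)
      \<partial>(\<pi> \<Otimes>\<^sub>M \<pi>))"

end

theory Submission
  imports Defs "Jordan_Normal_Form.Determinant"
begin


lemma det_on_rename:
  assumes f: "bij_betw f A B" and fin: "finite A"
  shows "det_on A (\<lambda>i j. M (f i) (f j)) = det_on B M"
proof -
  have injf: "inj_on f A" using f by (auto simp: bij_betw_def)
  have finB: "finite B" using f fin bij_betw_finite by blast
  define g where "g = inv_into A f"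
  have g: "bij_betw g B A" unfolding g_def using f by (rule bij_betw_inv_into)
  have gf: "\<And>x. x \<in> A \<Longrightarrow> g (f x) = x" unfolding g_def using injf by auto
  have fg: "\<And>x. x \<in> B \<Longrightarrow> f (g x) = x" unfolding g_def using f
    by (simp add: bij_betw_inv_into_right)
  have bij: "bij_betw (map_permutation A f) {p. p permutes A} {q. q permutes B}"
  proof (rule bij_betw_byWitness[where f' = "map_permutation B g"])
    show "\<forall>a\<in>{p. p permutes A}. map_permutation B g (map_permutation A f a) = a"
      using map_permutation_compose_inv[OF f _ gf] by auto
    show "\<forall>a\<in>{q. q permutes B}. map_permutation A f (map_permutation B g a) = a"
      using map_permutation_compose_inv[OF g _ fg] by auto
    show "map_permutation A f ` {p. p permutes A} \<subseteq> {q. q permutes B}"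
      using map_permutation_permutes[OF f] by auto
    show "map_permutation B g ` {q. q permutes B} \<subseteq> {p. p permutes A}"
      using map_permutation_permutes[OF g] by auto
  qed
  have "det_on B M = (\<Sum>p | p permutes A. of_int (sign (map_permutation A f p)) *
            (\<Prod>j\<in>B. M j (map_permutation A f p j)))"
    unfolding det_on_def by (rule sum.reindex_bij_betw[OF bij, symmetric])
  also have "\<dots> = (\<Sum>p | p permutes A. of_int (sign p) * (\<Prod>i\<in>A. M (f i) (f (p i))))"
  proof (rule sum.cong[OF refl])
    fix p assume p: "p \<in> {p. p permutes A}"
    have "sign (map_permutation A f p) = sign p"
      using sign_map_permutation[OF injf _ fin] p by auto
    moreover have "(\<Prod>j\<in>B. M j (map_permutation A f p j)) = (\<Prod>i\<in>A. M (f i) (f (p i)))"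
    proof -
      have "(\<Prod>j\<in>B. M j (map_permutation A f p j)) = (\<Prod>i\<in>A. M (f i) (map_permutation A f p (f i)))"
        by (rule prod.reindex_bij_betw[OF f, symmetric])
      also have "\<dots> = (\<Prod>i\<in>A. M (f i) (f (p i)))"
        by (rule prod.cong[OF refl]) (simp add: map_permutation_apply[OF injf])
      finally show ?thesis .
    qed
    ultimately show "of_int (sign (map_permutation A f p)) * (\<Prod>j\<in>B. M j (map_permutation A f p j)) =
        of_int (sign p) * (\<Prod>i\<in>A. M (f i) (f (p i)))" by simp
  qed
  finally show ?thesis unfolding det_on_def by simp
qed

definition ix :: "'a set \<Rightarrow> nat \<Rightarrow> 'a" where
  "ix S = (SOME e. bij_betw e {0..<card S} S)"

lemma ix_bij: "finite S \<Longrightarrow> bij_betw (ix S) {0..<card S} S"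
  unfolding ix_def using ex_bij_betw_nat_finite[of S] by (rule someI_ex)

definition jx :: "'a set \<Rightarrow> 'a \<Rightarrow> nat" where
  "jx S = inv_into {0..<card S} (ix S)"

lemma ix_in: "finite S \<Longrightarrow> k < card S \<Longrightarrow> ix S k \<in> S"
  using ix_bij[of S] by (auto simp: bij_betw_def)
lemma jx_lt: "finite S \<Longrightarrow> i \<in> S \<Longrightarrow> jx S i < card S"
  using ix_bij[of S] unfolding jx_def
  by (metis atLeastLessThan_iff bij_betw_def inv_into_into)
lemma ix_jx: "finite S \<Longrightarrow> i \<in> S \<Longrightarrow> ix S (jx S i) = i"
  using ix_bij[of S] unfolding jx_def by (simp add: bij_betw_inv_into_right)
lemma jx_ix: "finite S \<Longrightarrow> k < card S \<Longrightarrow> jx S (ix S k) = k"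
  using ix_bij[of S] unfolding jx_def by (simp add: bij_betw_inv_into_left)
lemma ix_inj: "finite S \<Longrightarrow> i < card S \<Longrightarrow> j < card S \<Longrightarrow> ix S i = ix S j \<longleftrightarrow> i = j"
  by (metis jx_ix)

definition toM :: "'a set \<Rightarrow> ('a \<Rightarrow> 'a \<Rightarrow> real) \<Rightarrow> real mat" where
  "toM S A = mat (card S) (card S) (\<lambda>(i,j). A (ix S i) (ix S j))"

lemma toM_carrier[simp]: "toM S A \<in> carrier_mat (card S) (card S)"
  unfolding toM_def by simp
lemma toM_dims[simp]: "dim_row (toM S A) = card S" "dim_col (toM S A) = card S"
  unfolding toM_def by simp_all
lemma toM_index[simp]: "i < card S \<Longrightarrow> j < card S \<Longrightarrow> toM S A $$ (i,j) = A (ix S i) (ix S j)"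
  unfolding toM_def by simp

lemma det_toM: assumes "finite S" shows "Determinant.det (toM S A) = det_on S A"
proof -
  have "Determinant.det (toM S A) = (\<Sum>p | p permutes {0..<card S}. of_int (sign p) *
          (\<Prod>i\<in>{0..<card S}. A (ix S i) (ix S (p i))))"
    unfolding det_def'[OF toM_carrier]
    by (intro sum.cong refl arg_cong2[where f="(*)"] prod.cong)
       (auto simp: permutes_in_image)
  also have "\<dots> = det_on {0..<card S} (\<lambda>i j. A (ix S i) (ix S j))"
    unfolding det_on_def by simp
  also have "\<dots> = det_on S A" by (rule det_on_rename[OF ix_bij[OF assms]]) simp
  finally show ?thesis .
qed

lemma det_on_cong:
  assumes "\<And>i j. i \<in> S \<Longrightarrow> j \<in> S \<Longrightarrow> A i j = B i j"
  shows "det_on S A = det_on S B"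
  unfolding det_on_def
  by (intro sum.cong refl arg_cong2[where f="(*)"] prod.cong)
     (auto simp: permutes_in_image assms)

definition mmul :: "'a set \<Rightarrow> ('a \<Rightarrow> 'a \<Rightarrow> real) \<Rightarrow> ('a \<Rightarrow> 'a \<Rightarrow> real) \<Rightarrow> ('a \<Rightarrow> 'a \<Rightarrow> real)" where
  "mmul S A B = (\<lambda>i j. \<Sum>k\<in>S. A i k * B k j)"

lemma toM_mult: assumes "finite S" shows "toM S (mmul S A B) = toM S A * toM S B"
proof (rule eq_matI)
  fix i j assume i: "i < dim_row (toM S A * toM S B)" and j: "j < dim_col (toM S A * toM S B)"
  hence i': "i < card S" and j': "j < card S" by auto
  have "(toM S A * toM S B) $$ (i,j) = (\<Sum>k\<in>{0..<card S}. A (ix S i) (ix S k) * B (ix S k) (ix S j))"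
    using i' j' by (simp add: scalar_prod_def)
  also have "\<dots> = (\<Sum>k\<in>S. A (ix S i) k * B k (ix S j))"
    by (rule sum.reindex_bij_betw[OF ix_bij[OF assms]])
  finally show "toM S (mmul S A B) $$ (i, j) = (toM S A * toM S B) $$ (i, j)"
    using i' j' by (simp add: mmul_def)
qed auto

lemma det_on_mult: assumes "finite S" shows "det_on S (mmul S A B) = det_on S A * det_on S B"
proof -
  have "det_on S (mmul S A B) = Determinant.det (toM S A * toM S B)"
    using det_toM[OF assms, of "mmul S A B"] toM_mult[OF assms] by simp
  thus ?thesis by (simp add: det_mult[OF toM_carrier toM_carrier] det_toM[OF assms])
qed

lemma det_on_id: assumes "finite S" shows "det_on S (\<lambda>i j. if i = j then 1 else 0) = 1"
proof -
  have "toM S (\<lambda>i j. if i = j then 1 else 0) = 1\<^sub>m (card S)"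
    by (rule eq_matI) (auto simp: ix_inj[OF assms])
  thus ?thesis using det_toM[OF assms, of "\<lambda>i j. if i = j then 1 else 0"] by simp
qed

lemma permutes_remove_iff: "p permutes (S - {a}) \<longleftrightarrow> p permutes S \<and> p a = a" if "a \<in> S"
proof
  assume p: "p permutes (S - {a})"
  show "p permutes S \<and> p a = a"
    using permutes_subset[OF p, of S] permutes_not_in[OF p, of a] by auto
next
  assume p: "p permutes S \<and> p a = a"
  show "p permutes (S - {a})"
    by (rule permutes_superset[of p S]) (use p in auto)
qed

lemma det_on_row:
  assumes fin: "finite S" and a: "a \<in> S" and z: "\<And>j. j \<in> S \<Longrightarrow> j \<noteq> a \<Longrightarrow> A a j = 0"
  shows "det_on S A = A a a * det_on (S - {a}) A"
proof -
  have "det_on S A = (\<Sum>p\<in>{p. p permutes S \<and> p a = a}. of_int (sign p) * (\<Prod>i\<in>S. A i (p i)))"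
    unfolding det_on_def
  proof (rule sum.mono_neutral_right)
    show "finite {p. p permutes S}" using fin by (simp add: finite_permutations)
    show "{p. p permutes S \<and> p a = a} \<subseteq> {p. p permutes S}" by auto
    show "\<forall>p\<in>{p. p permutes S} - {p. p permutes S \<and> p a = a}. of_int (sign p) * (\<Prod>i\<in>S. A i (p i)) = 0"
    proof
      fix p assume p: "p \<in> {p. p permutes S} - {p. p permutes S \<and> p a = a}"
      hence "A a (p a) = 0" using z[of "p a"] a by (auto simp: permutes_in_image)
      hence A0: "A a (p a) = 0" .
      have "(\<Prod>i\<in>S. A i (p i)) = 0" by (rule prod_zero[OF fin]) (use a A0 in auto)
      thus "of_int (sign p) * (\<Prod>i\<in>S. A i (p i)) = 0" by simp
    qed
  qed
  also have "\<dots> = (\<Sum>p\<in>{p. p permutes (S - {a})}. A a a * (of_int (sign p) * (\<Prod>i\<in>S - {a}. A i (p i))))"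
  proof (rule sum.cong)
    show "{p. p permutes S \<and> p a = a} = {p. p permutes (S - {a})}" using permutes_remove_iff[OF a] by auto
  next
    fix p assume "p \<in> {p. p permutes (S - {a})}"
    hence "p a = a" using permutes_remove_iff[OF a] by auto
    thus "of_int (sign p) * (\<Prod>i\<in>S. A i (p i)) = A a a * (of_int (sign p) * (\<Prod>i\<in>S - {a}. A i (p i)))"
      using prod.remove[OF fin a, of "\<lambda>i. A i (p i)"] by simp
  qed
  also have "\<dots> = A a a * det_on (S - {a}) A" unfolding det_on_def by (simp add: sum_distrib_left)
  finally show ?thesis .
qed

lemma det_on_col:
  assumes fin: "finite S" and a: "a \<in> S" and z: "\<And>i. i \<in> S \<Longrightarrow> i \<noteq> a \<Longrightarrow> A i a = 0"
  shows "det_on S A = A a a * det_on (S - {a}) A"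
proof -
  have "det_on S A = (\<Sum>p\<in>{p. p permutes S \<and> p a = a}. of_int (sign p) * (\<Prod>i\<in>S. A i (p i)))"
    unfolding det_on_def
  proof (rule sum.mono_neutral_right)
    show "finite {p. p permutes S}" using fin by (simp add: finite_permutations)
    show "{p. p permutes S \<and> p a = a} \<subseteq> {p. p permutes S}" by auto
    show "\<forall>p\<in>{p. p permutes S} - {p. p permutes S \<and> p a = a}. of_int (sign p) * (\<Prod>i\<in>S. A i (p i)) = 0"
    proof
      fix p assume p: "p \<in> {p. p permutes S} - {p. p permutes S \<and> p a = a}"
      hence pS: "p permutes S" and pa: "p a \<noteq> a" by auto
      define ii where "ii = inv_into UNIV p a"
      have pi: "p ii = a" unfolding ii_def using pS by (meson permutes_inverses(1))
      have iS: "ii \<in> S" unfolding ii_def using pS a by (simp add: permutes_in_image permutes_inv)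
      have "ii \<noteq> a" using pi pa by auto
      hence "A ii (p ii) = 0" using z[OF iS] pi by simp
      hence A0: "A ii (p ii) = 0" .
      have "(\<Prod>i\<in>S. A i (p i)) = 0" by (rule prod_zero[OF fin]) (use iS A0 in auto)
      thus "of_int (sign p) * (\<Prod>i\<in>S. A i (p i)) = 0" by simp
    qed
  qed
  also have "\<dots> = (\<Sum>p\<in>{p. p permutes (S - {a})}. A a a * (of_int (sign p) * (\<Prod>i\<in>S - {a}. A i (p i))))"
  proof (rule sum.cong)
    show "{p. p permutes S \<and> p a = a} = {p. p permutes (S - {a})}" using permutes_remove_iff[OF a] by auto
  next
    fix p assume "p \<in> {p. p permutes (S - {a})}"
    hence "p a = a" using permutes_remove_iff[OF a] by auto
    thus "of_int (sign p) * (\<Prod>i\<in>S. A i (p i)) = A a a * (of_int (sign p) * (\<Prod>i\<in>S - {a}. A i (p i)))"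
      using prod.remove[OF fin a, of "\<lambda>i. A i (p i)"] by simp
  qed
  also have "\<dots> = A a a * det_on (S - {a}) A" unfolding det_on_def by (simp add: sum_distrib_left)
  finally show ?thesis .
qed

lemma det_on_schur:
  assumes fin: "finite S" and a: "a \<in> S" and q: "A a a \<noteq> 0"
  shows "det_on S A = A a a * det_on (S - {a}) (\<lambda>i j. A i j - A i a * A a j / A a a)"
proof -
  define E where "E = (\<lambda>i j. (if i = j then 1 else 0) - (if j = a \<and> i \<noteq> a then A i a / A a a else (0::real)))"
  have EA: "mmul S E A i j = A i j - (if i \<noteq> a then A i a / A a a * A a j else 0)" if "i \<in> S" for i j
  proof -
    have "(\<lambda>k. E i k * A k j) = (\<lambda>k. (if k = i then A i j else 0) - (if k = a then (if i \<noteq> a then A i a / A a a * A a j else 0) else 0))"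
      by (auto simp: E_def fun_eq_iff)
    hence "mmul S E A i j = (\<Sum>k\<in>S. (if k = i then A i j else 0)) - (\<Sum>k\<in>S. (if k = a then (if i \<noteq> a then A i a / A a a * A a j else 0) else 0))"
      unfolding mmul_def by (simp only: sum_subtractf[symmetric])
    also have "\<dots> = A i j - (if i \<noteq> a then A i a / A a a * A a j else 0)"
      using fin that a by (simp add: sum.delta)
    finally show ?thesis .
  qed
  have "det_on S E = E a a * det_on (S - {a}) E"
    by (rule det_on_row[OF fin a]) (simp add: E_def)
  also have "det_on (S - {a}) E = det_on (S - {a}) (\<lambda>i j. if i = j then 1 else 0)"
    by (rule det_on_cong) (auto simp: E_def)
  finally have dE: "det_on S E = 1" using det_on_id[of "S - {a}"] fin by (simp add: E_def)
  have "det_on S (mmul S E A) = mmul S E A a a * det_on (S - {a}) (mmul S E A)"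
    by (rule det_on_col[OF fin a]) (use q in \<open>simp add: EA\<close>)
  also have "\<dots> = A a a * det_on (S - {a}) (\<lambda>i j. A i j - A i a * A a j / A a a)"
    using a by (auto intro!: det_on_cong simp: EA)
  finally show ?thesis using det_on_mult[OF fin, of E A] dE by simp
qed


definition invF :: "'a set \<Rightarrow> ('a \<Rightarrow> 'a \<Rightarrow> real) \<Rightarrow> 'a \<Rightarrow> 'a \<Rightarrow> real" where
  "invF S A = (\<lambda>i j. if i \<in> S \<and> j \<in> S then adj_mat (toM S A) $$ (jx S i, jx S j) / det_on S A else 0)"

lemma jx_eq_iff: "finite S \<Longrightarrow> i \<in> S \<Longrightarrow> j \<in> S \<Longrightarrow> jx S i = jx S j \<longleftrightarrow> i = j"
  by (metis ix_jx)

lemma adj_left: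
  assumes fin: "finite S" and i: "i \<in> S" and j: "j \<in> S"
  shows "(\<Sum>k\<in>S. adj_mat (toM S A) $$ (jx S i, jx S k) * A k j) = (if i = j then det_on S A else 0)"
    (is "?lhs = _")
proof -
  let ?n = "card S"
  have adjc: "adj_mat (toM S A) \<in> carrier_mat ?n ?n" by (rule adj_mat(1)[OF toM_carrier])
  have e: "(adj_mat (toM S A) * toM S A) $$ (jx S i, jx S j) = (Determinant.det (toM S A) \<cdot>\<^sub>m 1\<^sub>m ?n) $$ (jx S i, jx S j)"
    using adj_mat(3)[OF toM_carrier[of S A]] by simp
  have li: "jx S i < ?n" and lj: "jx S j < ?n" using jx_lt[OF fin i] jx_lt[OF fin j] by auto
  have "(adj_mat (toM S A) * toM S A) $$ (jx S i, jx S j) = (\<Sum>k\<in>{0..<?n}. adj_mat (toM S A) $$ (jx S i, k) * A (ix S k) j)"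
    using li lj adjc by (simp add: scalar_prod_def ix_jx[OF fin j])
  also have "\<dots> = (\<Sum>k\<in>{0..<?n}. adj_mat (toM S A) $$ (jx S i, jx S (ix S k)) * A (ix S k) j)"
    by (rule sum.cong) (auto simp: jx_ix[OF fin])
  also have "\<dots> = (\<Sum>k\<in>S. adj_mat (toM S A) $$ (jx S i, jx S k) * A k j)"
    by (rule sum.reindex_bij_betw[OF ix_bij[OF fin]])
  finally have X: "det_on S A * (if i = j then 1 else 0) = ?lhs"
    using e li lj by (simp add: det_toM[OF fin] jx_eq_iff[OF fin i j])
  show ?thesis unfolding X[symmetric] by simp
qed

lemma adj_right:
  assumes fin: "finite S" and i: "i \<in> S" and j: "j \<in> S"
  shows "(\<Sum>k\<in>S. A i k * adj_mat (toM S A) $$ (jx S k, jx S j)) = (if i = j then det_on S A else 0)"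
    (is "?lhs = _")
proof -
  let ?n = "card S"
  have adjc: "adj_mat (toM S A) \<in> carrier_mat ?n ?n" by (rule adj_mat(1)[OF toM_carrier])
  have e: "(toM S A * adj_mat (toM S A)) $$ (jx S i, jx S j) = (Determinant.det (toM S A) \<cdot>\<^sub>m 1\<^sub>m ?n) $$ (jx S i, jx S j)"
    using adj_mat(2)[OF toM_carrier[of S A]] by simp
  have li: "jx S i < ?n" and lj: "jx S j < ?n" using jx_lt[OF fin i] jx_lt[OF fin j] by auto
  have "(toM S A * adj_mat (toM S A)) $$ (jx S i, jx S j) = (\<Sum>k\<in>{0..<?n}. A i (ix S k) * adj_mat (toM S A) $$ (k, jx S j))"
    using li lj adjc by (simp add: scalar_prod_def ix_jx[OF fin i])
  also have "\<dots> = (\<Sum>k\<in>{0..<?n}. A i (ix S k) * adj_mat (toM S A) $$ (jx S (ix S k), jx S j))"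
    by (rule sum.cong) (auto simp: jx_ix[OF fin])
  also have "\<dots> = (\<Sum>k\<in>S. A i k * adj_mat (toM S A) $$ (jx S k, jx S j))"
    by (rule sum.reindex_bij_betw[OF ix_bij[OF fin]])
  finally have X: "det_on S A * (if i = j then 1 else 0) = ?lhs"
    using e li lj by (simp add: det_toM[OF fin] jx_eq_iff[OF fin i j])
  show ?thesis unfolding X[symmetric] by simp
qed

lemma invF_left:
  assumes fin: "finite S" and d: "det_on S A \<noteq> 0" and i: "i \<in> S" and j: "j \<in> S"
  shows "(\<Sum>k\<in>S. invF S A i k * A k j) = (if i = j then 1 else 0)"
proof -
  have "(\<Sum>k\<in>S. invF S A i k * A k j) = (\<Sum>k\<in>S. adj_mat (toM S A) $$ (jx S i, jx S k) * A k j) / det_on S A"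
    unfolding sum_divide_distrib using i by (intro sum.cong) (auto simp: invF_def)
  thus ?thesis using adj_left[OF fin i j] d by simp
qed

lemma invF_right:
  assumes fin: "finite S" and d: "det_on S A \<noteq> 0" and i: "i \<in> S" and j: "j \<in> S"
  shows "(\<Sum>k\<in>S. A i k * invF S A k j) = (if i = j then 1 else 0)"
proof -
  have "(\<Sum>k\<in>S. A i k * invF S A k j) = (\<Sum>k\<in>S. A i k * adj_mat (toM S A) $$ (jx S k, jx S j)) / det_on S A"
    unfolding sum_divide_distrib using j by (intro sum.cong) (auto simp: invF_def)
  thus ?thesis using adj_right[OF fin i j] d by simp
qed

definition is_inv :: "'a set \<Rightarrow> ('a \<Rightarrow> 'a \<Rightarrow> real) \<Rightarrow> ('a \<Rightarrow> 'a \<Rightarrow> real) \<Rightarrow> bool" where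
  "is_inv S A B = ((\<forall>i\<in>S. \<forall>j\<in>S. (\<Sum>k\<in>S. B i k * A k j) = (if i = j then 1 else 0))
                        \<and> (\<forall>i j. i \<notin> S \<or> j \<notin> S \<longrightarrow> B i j = 0))"

lemma is_inv_unique:
  assumes fin: "finite S" and d: "det_on S A \<noteq> 0" and B: "is_inv S A B"
  shows "B = invF S A"
proof (intro ext)
  fix i j
  show "B i j = invF S A i j"
  proof (cases "i \<in> S \<and> j \<in> S")
    case False thus ?thesis using B by (auto simp: is_inv_def invF_def)
  next
    case True
    hence i: "i \<in> S" and j: "j \<in> S" by auto
    have "(\<Sum>l\<in>S. B i l * (if l = j then 1 else 0)) = (\<Sum>l\<in>S. if l = j then B i l else 0)"
      by (rule sum.cong) auto
    hence "B i j = (\<Sum>l\<in>S. B i l * (if l = j then 1 else 0))" using fin j by simp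
    also have "\<dots> = (\<Sum>l\<in>S. B i l * (\<Sum>k\<in>S. A l k * invF S A k j))"
      by (intro sum.cong refl) (simp add: invF_right[OF fin d _ j])
    also have "\<dots> = (\<Sum>l\<in>S. \<Sum>k\<in>S. B i l * A l k * invF S A k j)"
      by (simp add: sum_distrib_left mult.assoc)
    also have "\<dots> = (\<Sum>k\<in>S. \<Sum>l\<in>S. B i l * A l k * invF S A k j)"
      by (rule sum.swap)
    also have "\<dots> = (\<Sum>k\<in>S. (\<Sum>l\<in>S. B i l * A l k) * invF S A k j)"
      by (simp add: sum_distrib_right)
    also have "\<dots> = (\<Sum>k\<in>S. (if i = k then 1 else 0) * invF S A k j)"
      using B i by (intro sum.cong refl) (auto simp: is_inv_def)
    also have "\<dots> = (\<Sum>k\<in>S. if i = k then invF S A k j else 0)"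
      by (rule sum.cong) auto
    also have "\<dots> = invF S A i j" using fin i by simp
    finally show ?thesis .
  qed
qed

lemma inv_on_eq:
  assumes fin: "finite S" and d: "det_on S A \<noteq> 0"
  shows "inv_on S A = invF S A"
proof -
  have "is_inv S A (invF S A)" unfolding is_inv_def
  proof (intro conjI ballI allI impI)
    fix i j assume "i \<in> S" "j \<in> S"
    thus "(\<Sum>k\<in>S. invF S A i k * A k j) = (if i = j then 1 else 0)" by (rule invF_left[OF fin d])
  next
    fix i j assume "i \<notin> S \<or> j \<notin> S"
    thus "invF S A i j = 0" unfolding invF_def by auto
  qed
  moreover have "inv_on S A = (SOME B. is_inv S A B)" unfolding inv_on_def is_inv_def by simp
  ultimately have "is_inv S A (inv_on S A)" using someI[of "is_inv S A"] by simp
  thus ?thesis by (rule is_inv_unique[OF fin d])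
qed

lemma inv_on_left:
  "finite S \<Longrightarrow> det_on S A \<noteq> 0 \<Longrightarrow> i \<in> S \<Longrightarrow> j \<in> S \<Longrightarrow>
    (\<Sum>k\<in>S. inv_on S A i k * A k j) = (if i = j then 1 else 0)"
  by (simp add: inv_on_eq invF_left)

lemma inv_on_right:
  "finite S \<Longrightarrow> det_on S A \<noteq> 0 \<Longrightarrow> i \<in> S \<Longrightarrow> j \<in> S \<Longrightarrow>
    (\<Sum>k\<in>S. A i k * inv_on S A k j) = (if i = j then 1 else 0)"
  by (simp add: inv_on_eq invF_right)

lemma inv_on_out: "finite S \<Longrightarrow> det_on S A \<noteq> 0 \<Longrightarrow> i \<notin> S \<or> j \<notin> S \<Longrightarrow> inv_on S A i j = 0"
  by (auto simp: inv_on_eq invF_def)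

lemma det_inv_on:
  assumes fin: "finite S" and d: "det_on S A \<noteq> 0"
  shows "det_on S (inv_on S A) * det_on S A = 1"
proof -
  have "det_on S (mmul S (inv_on S A) A) = det_on S (\<lambda>i j. if i = j then 1 else 0)"
    by (rule det_on_cong) (simp add: mmul_def inv_on_left[OF fin d])
  thus ?thesis using det_on_mult[OF fin] det_on_id[OF fin] by simp
qed

lemma inv_on_sym:
  assumes fin: "finite S" and d: "det_on S A \<noteq> 0" and sym: "\<And>i j. i \<in> S \<Longrightarrow> j \<in> S \<Longrightarrow> A i j = A j i"
  shows "inv_on S A i j = inv_on S A j i"
proof -
  have "is_inv S A (\<lambda>i j. inv_on S A j i)" unfolding is_inv_def
  proof (intro conjI ballI allI impI)
    fix i j assume i: "i \<in> S" and j: "j \<in> S"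
    have "(\<Sum>k\<in>S. inv_on S A k i * A k j) = (\<Sum>k\<in>S. A j k * inv_on S A k i)"
      using j by (intro sum.cong refl) (simp add: sym)
    also have "\<dots> = (if i = j then 1 else 0)" using inv_on_right[OF fin d j i] by simp
    finally show "(\<Sum>k\<in>S. inv_on S A k i * A k j) = (if i = j then 1 else 0)" .
  next
    fix i j assume "i \<notin> S \<or> j \<notin> S"
    thus "inv_on S A j i = 0" using inv_on_out[OF fin d] by blast
  qed
  hence "(\<lambda>i j. inv_on S A j i) = invF S A" by (rule is_inv_unique[OF fin d])
  hence "(\<lambda>i j. inv_on S A j i) = inv_on S A" using inv_on_eq[OF fin d] by simp
  from fun_cong[OF fun_cong[OF this, of j], of i] show ?thesis by simp
qed

lemma meas_det_mat:
  assumes c: "\<And>x. G x \<in> carrier_mat n n"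
    and m: "\<And>i j. i < n \<Longrightarrow> j < n \<Longrightarrow> (\<lambda>x. G x $$ (i,j)) \<in> borel_measurable M"
  shows "(\<lambda>x. Determinant.det (G x) :: real) \<in> borel_measurable M"
proof -
  have "(\<lambda>x. Determinant.det (G x)) = (\<lambda>x. \<Sum>p\<in>{p. p permutes {0..<n}}. of_int (sign p) * (\<Prod>i = 0..<n. G x $$ (i, p i)))"
    using det_def'[OF c] by auto
  also have "\<dots> \<in> borel_measurable M"
  proof (intro borel_measurable_sum borel_measurable_times borel_measurable_const borel_measurable_prod)
    fix p i assume "p \<in> {p. p permutes {0..<n}}" "i \<in> {0..<n}"
    thus "(\<lambda>x. G x $$ (i, p i)) \<in> borel_measurable M" using m by (auto simp: permutes_in_image)
  qed
  finally show ?thesis .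
qed

lemma meas_det_on:
  assumes "\<And>i j. (\<lambda>x. F x i j) \<in> borel_measurable M"
  shows "(\<lambda>x. det_on S (F x)) \<in> borel_measurable M"
  unfolding det_on_def using assms by measurable

lemma meas_invF:
  assumes fin: "finite S" and m: "\<And>i j. (\<lambda>x. F x i j) \<in> borel_measurable M"
  shows "(\<lambda>x. invF S (F x) i j) \<in> borel_measurable M"
proof (cases "i \<in> S \<and> j \<in> S")
  case False
  hence "(\<lambda>x. invF S (F x) i j) = (\<lambda>x. 0)" by (auto simp: invF_def)
  thus ?thesis by simp
next
  case True
  hence i: "i \<in> S" and j: "j \<in> S" by auto
  let ?n = "card S"
  have li: "jx S i < ?n" and lj: "jx S j < ?n" using jx_lt[OF fin i] jx_lt[OF fin j] by auto
  have "(\<lambda>x. invF S (F x) i j) = (\<lambda>x. ((-1)^(jx S j + jx S i) * Determinant.det (mat_delete (toM S (F x)) (jx S j) (jx S i))) / det_on S (F x))"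
    using i j li lj by (simp add: invF_def adj_mat_def cofactor_def)
  also have "\<dots> \<in> borel_measurable M"
  proof (intro borel_measurable_divide borel_measurable_times borel_measurable_const meas_det_on m)
    show "(\<lambda>x. Determinant.det (mat_delete (toM S (F x)) (jx S j) (jx S i))) \<in> borel_measurable M"
    proof (rule meas_det_mat[where n = "?n - 1"])
      show "\<And>x. mat_delete (toM S (F x)) (jx S j) (jx S i) \<in> carrier_mat (?n - 1) (?n - 1)"
        by (rule mat_delete_carrier[OF toM_carrier])
      fix a b assume a: "a < ?n - 1" and b: "b < ?n - 1"
      have "(\<lambda>x. mat_delete (toM S (F x)) (jx S j) (jx S i) $$ (a, b)) =
            (\<lambda>x. F x (ix S (if a < jx S j then a else Suc a)) (ix S (if b < jx S i then b else Suc b)))"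
        using a b by (simp add: mat_delete_def)
      also have "\<dots> \<in> borel_measurable M" using m by simp
      finally show "(\<lambda>x. mat_delete (toM S (F x)) (jx S j) (jx S i) $$ (a, b)) \<in> borel_measurable M" .
    qed
  qed
  finally show ?thesis .
qed


lemma psf: "product_sigma_finite (\<lambda>_::'i. lborel)" by standard

definition qf :: "'a set \<Rightarrow> ('a \<Rightarrow> 'a \<Rightarrow> real) \<Rightarrow> ('a \<Rightarrow> real) \<Rightarrow> real" where
  "qf S Q x = (\<Sum>i\<in>S. \<Sum>j\<in>S. x i * Q i j * x j)"

lemma qf_cong: "(\<And>i. i \<in> S \<Longrightarrow> x i = y i) \<Longrightarrow> qf S Q x = qf S Q y"
  unfolding qf_def by (intro sum.cong refl) auto

lemma pos_def_on_qf: "pos_def_on S Q \<longleftrightarrow> (\<forall>x. (\<exists>i\<in>S. x i \<noteq> 0) \<longrightarrow> 0 < qf S Q x)"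
  unfolding pos_def_on_def qf_def by simp

lemma qf_complete_square:
  assumes fin: "finite F" and a: "a \<notin> F" and sym: "\<And>i. i \<in> F \<Longrightarrow> Q i a = Q a i" and q: "Q a a \<noteq> 0"
  shows "qf (insert a F) Q x = Q a a * (x a + (\<Sum>j\<in>F. Q a j * x j) / Q a a)\<^sup>2
           + qf F (\<lambda>i j. Q i j - Q i a * Q a j / Q a a) x"
proof -
  define L where "L = (\<Sum>j\<in>F. Q a j * x j)"
  have 1: "qf (insert a F) Q x = x a * Q a a * x a + (\<Sum>j\<in>F. x a * Q a j * x j)
            + (\<Sum>i\<in>F. x i * Q i a * x a) + qf F Q x"
    unfolding qf_def using fin a by (simp add: sum.distrib)
  have 2: "(\<Sum>i\<in>F. x i * Q i a * x a) = x a * L"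
  proof -
    have "(\<Sum>i\<in>F. x i * Q i a * x a) = (\<Sum>i\<in>F. x a * (Q a i * x i))"
      by (rule sum.cong) (auto simp: sym)
    thus ?thesis by (simp add: L_def sum_distrib_left)
  qed
  have 3: "(\<Sum>j\<in>F. x a * Q a j * x j) = x a * L"
    by (simp add: L_def sum_distrib_left mult.assoc)
  have 4: "qf F (\<lambda>i j. Q i j - Q i a * Q a j / Q a a) x = qf F Q x - L * L / Q a a"
  proof -
    have "qf F (\<lambda>i j. Q i j - Q i a * Q a j / Q a a) x
        = (\<Sum>i\<in>F. \<Sum>j\<in>F. x i * Q i j * x j - (x i * Q i a) * (Q a j * x j) / Q a a)"
      unfolding qf_def by (intro sum.cong refl) (simp add: algebra_simps)
    also have "\<dots> = qf F Q x - (\<Sum>i\<in>F. \<Sum>j\<in>F. (x i * Q i a) * (Q a j * x j)) / Q a a"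
      unfolding qf_def by (simp add: sum_subtractf sum_divide_distrib)
    also have "(\<Sum>i\<in>F. \<Sum>j\<in>F. (x i * Q i a) * (Q a j * x j)) = (\<Sum>i\<in>F. x i * Q i a) * L"
      unfolding L_def by (simp add: sum_product)
    also have "(\<Sum>i\<in>F. x i * Q i a) = L"
      unfolding L_def by (rule sum.cong) (auto simp: sym)
    finally show ?thesis .
  qed
  show ?thesis unfolding 1 2 3 4 L_def[symmetric] using q
    by (simp add: field_simps power2_eq_square)
qed

lemma meas_comp: "i \<in> S \<Longrightarrow> (\<lambda>x. x i) \<in> borel_measurable (PiM S (\<lambda>_. lborel))"
proof -
  assume i: "i \<in> S"
  have "(\<lambda>x. x i) \<in> measurable (PiM S (\<lambda>_. lborel)) lborel"
    by (rule measurable_component_singleton[OF i])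
  thus ?thesis by (simp add: measurable_lborel2)
qed

lemma meas_qf: "(\<lambda>x. qf S Q x) \<in> borel_measurable (PiM S (\<lambda>_. lborel))"
  unfolding qf_def
  by (intro borel_measurable_sum borel_measurable_times borel_measurable_const meas_comp)

lemma nn_integral_normal: "0 < \<sigma> \<Longrightarrow> (\<integral>\<^sup>+y. ennreal (normal_density \<mu> \<sigma> y) \<partial>lborel) = 1"
  by (subst nn_integral_eq_integral) (auto simp: normal_density_nonneg)

lemma gauss1:
  assumes q: "0 < q"
  shows "(\<integral>\<^sup>+y. ennreal (exp (-(1/2) * (q * (y + c)\<^sup>2))) \<partial>lborel) = ennreal (sqrt (2*pi/q))"
proof -
  have eq: "exp (-(1/2) * (q * (y + c)\<^sup>2)) = sqrt (2*pi/q) * normal_density (-c) (1 / sqrt q) y" for y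
  proof -
    have s: "(1 / sqrt q)\<^sup>2 = 1 / q" using q by (simp add: power_divide)
    have "normal_density (-c) (1 / sqrt q) y = 1 / sqrt (2 * pi / q) * exp (-(y + c)\<^sup>2 / (2 / q))"
      unfolding normal_density_def s by simp
    moreover have "sqrt (2*pi/q) * (1 / sqrt (2 * pi / q)) = 1" using q by simp
    moreover have "-(y + c)\<^sup>2 / (2 / q) = -(1/2) * (q * (y + c)\<^sup>2)" using q by (simp add: field_simps)
    ultimately show ?thesis by (metis mult.assoc mult_1)
  qed
  have "(\<integral>\<^sup>+y. ennreal (exp (-(1/2) * (q * (y + c)\<^sup>2))) \<partial>lborel)
      = (\<integral>\<^sup>+y. ennreal (sqrt (2*pi/q)) * ennreal (normal_density (-c) (1 / sqrt q) y) \<partial>lborel)"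
    unfolding eq using q by (intro nn_integral_cong) (simp add: ennreal_mult)
  also have "\<dots> = ennreal (sqrt (2*pi/q)) * (\<integral>\<^sup>+y. ennreal (normal_density (-c) (1 / sqrt q) y) \<partial>lborel)"
    by (rule nn_integral_cmult) simp
  also have "\<dots> = ennreal (sqrt (2*pi/q))" using q by (simp add: nn_integral_normal)
  finally show ?thesis .
qed


lemma det_on_empty: "det_on {} Q = 1"
  unfolding det_on_def by (simp add: permutes_empty)

lemma gauss_int:
  assumes "finite S"
  shows "(\<forall>i\<in>S. \<forall>j\<in>S. Q i j = Q j i) \<Longrightarrow> pos_def_on S Q \<Longrightarrow>
    0 < det_on S Q \<and>
    (\<integral>\<^sup>+x. ennreal (exp (-(1/2) * qf S Q x)) \<partial>PiM S (\<lambda>_. lborel)) = ennreal (sqrt ((2*pi)^card S / det_on S Q))"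
  using assms
proof (induction S arbitrary: Q rule: finite_induct)
  case empty
  show ?case by (simp add: det_on_empty qf_def PiM_empty nn_integral_count_space_finite)
next
  case (insert a F Q)
  note fin = insert.hyps(1) and a = insert.hyps(2)
  have sym: "\<And>i j. i \<in> insert a F \<Longrightarrow> j \<in> insert a F \<Longrightarrow> Q i j = Q j i" using insert.prems(1) by blast
  have pd: "\<And>x. (\<exists>i\<in>insert a F. x i \<noteq> 0) \<Longrightarrow> 0 < qf (insert a F) Q x"
    using insert.prems(2) unfolding pos_def_on_qf by blast
  define q where "q = Q a a"
  have qpos: "0 < q"
  proof -
    define x where "x = (\<lambda>i. if i = a then 1 else (0::real))"
    have "qf (insert a F) Q x = (\<Sum>i\<in>insert a F. if i = a then Q a a else 0)"
      unfolding qf_def by (intro sum.cong refl) (simp add: x_def if_distrib sum.delta[OF finite_insert[THEN iffD2, OF fin]] cong: if_cong)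
    also have "\<dots> = Q a a" using fin by simp
    finally show ?thesis using pd[of x] unfolding q_def x_def by auto
  qed
  define R where "R = (\<lambda>i j. Q i j - Q i a * Q a j / q)"
  have symR: "\<forall>i\<in>F. \<forall>j\<in>F. R i j = R j i"
    unfolding R_def using sym by (auto simp: mult.commute)
  have cs: "qf (insert a F) Q x = q * (x a + (\<Sum>j\<in>F. Q a j * x j) / q)\<^sup>2 + qf F R x" for x
    unfolding R_def q_def by (rule qf_complete_square[OF fin a]) (use sym qpos q_def in auto)
  have pdR: "pos_def_on F R" unfolding pos_def_on_qf
  proof (intro allI impI)
    fix x :: "'a \<Rightarrow> real" assume "\<exists>i\<in>F. x i \<noteq> 0"
    then obtain i where i: "i \<in> F" "x i \<noteq> 0" by blast
    define y where "y = x(a := - (\<Sum>j\<in>F. Q a j * x j) / q)"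
    have yF: "\<And>j. j \<in> F \<Longrightarrow> y j = x j" using a unfolding y_def by auto
    have "(\<Sum>j\<in>F. Q a j * y j) = (\<Sum>j\<in>F. Q a j * x j)" by (rule sum.cong) (auto simp: yF)
    hence "y a + (\<Sum>j\<in>F. Q a j * y j) / q = 0" unfolding y_def using qpos by (simp add: field_simps)
    hence "qf (insert a F) Q y = qf F R y" using cs[of y] by simp
    also have "\<dots> = qf F R x" by (rule qf_cong) (simp add: yF)
    finally have "qf (insert a F) Q y = qf F R x" .
    moreover have "0 < qf (insert a F) Q y" using i yF by (intro pd) auto
    ultimately show "0 < qf F R x" by simp
  qed
  from insert.IH[OF symR pdR] have IH1: "0 < det_on F R"
    and IH2: "(\<integral>\<^sup>+x. ennreal (exp (-(1/2) * qf F R x)) \<partial>PiM F (\<lambda>_. lborel)) = ennreal (sqrt ((2*pi)^card F / det_on F R))"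
    by auto
  have det: "det_on (insert a F) Q = q * det_on F R"
  proof -
    have "det_on (insert a F) Q = Q a a * det_on (insert a F - {a}) (\<lambda>i j. Q i j - Q i a * Q a j / Q a a)"
      by (rule det_on_schur) (use fin qpos q_def in auto)
    also have "insert a F - {a} = F" using a by auto
    finally show ?thesis unfolding R_def q_def .
  qed
  have dpos: "0 < det_on (insert a F) Q" unfolding det using qpos IH1 by simp
  interpret product_sigma_finite "\<lambda>_::'a. lborel" by (rule psf)
  have meas: "(\<lambda>x. ennreal (exp (-(1/2) * qf (insert a F) Q x))) \<in> borel_measurable (PiM (insert a F) (\<lambda>_. lborel))"
    using meas_qf by measurable
  have "(\<integral>\<^sup>+x. ennreal (exp (-(1/2) * qf (insert a F) Q x)) \<partial>PiM (insert a F) (\<lambda>_. lborel))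
     = (\<integral>\<^sup>+x. (\<integral>\<^sup>+y. ennreal (exp (-(1/2) * qf (insert a F) Q (x(a := y)))) \<partial>lborel) \<partial>PiM F (\<lambda>_. lborel))"
    by (rule product_nn_integral_insert[OF fin a meas])
  also have "\<dots> = (\<integral>\<^sup>+x. ennreal (exp (-(1/2) * qf F R x)) * ennreal (sqrt (2*pi/q)) \<partial>PiM F (\<lambda>_. lborel))"
  proof (rule nn_integral_cong)
    fix x :: "'a \<Rightarrow> real"
    define c where "c = (\<Sum>j\<in>F. Q a j * x j) / q"
    have e: "qf (insert a F) Q (x(a := y)) = q * (y + c)\<^sup>2 + qf F R x" for y
    proof -
      have "(\<Sum>j\<in>F. Q a j * (x(a := y)) j) = (\<Sum>j\<in>F. Q a j * x j)"
        by (rule sum.cong) (use a in auto)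
      moreover have "qf F R (x(a := y)) = qf F R x" by (rule qf_cong) (use a in auto)
      ultimately show ?thesis using cs[of "x(a := y)"] unfolding c_def by simp
    qed
    have "(\<integral>\<^sup>+y. ennreal (exp (-(1/2) * qf (insert a F) Q (x(a := y)))) \<partial>lborel)
        = (\<integral>\<^sup>+y. ennreal (exp (-(1/2) * qf F R x)) * ennreal (exp (-(1/2) * (q * (y + c)\<^sup>2))) \<partial>lborel)"
      by (intro nn_integral_cong) (simp add: e ennreal_mult[symmetric] exp_add[symmetric] algebra_simps)
    also have "\<dots> = ennreal (exp (-(1/2) * qf F R x)) * (\<integral>\<^sup>+y. ennreal (exp (-(1/2) * (q * (y + c)\<^sup>2))) \<partial>lborel)"
      by (rule nn_integral_cmult) simp
    also have "\<dots> = ennreal (exp (-(1/2) * qf F R x)) * ennreal (sqrt (2*pi/q))"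
      using gauss1[OF qpos] by simp
    finally show "(\<integral>\<^sup>+y. ennreal (exp (-(1/2) * qf (insert a F) Q (x(a := y)))) \<partial>lborel)
        = ennreal (exp (-(1/2) * qf F R x)) * ennreal (sqrt (2*pi/q))" .
  qed
  also have "\<dots> = (\<integral>\<^sup>+x. ennreal (exp (-(1/2) * qf F R x)) \<partial>PiM F (\<lambda>_. lborel)) * ennreal (sqrt (2*pi/q))"
    by (rule nn_integral_multc) (use meas_qf in measurable)
  also have "\<dots> = ennreal (sqrt ((2*pi)^card F / det_on F R) * sqrt (2*pi/q))"
    unfolding IH2 by (subst ennreal_mult) (use IH1 qpos in auto)
  also have "sqrt ((2*pi)^card F / det_on F R) * sqrt (2*pi/q) = sqrt ((2*pi)^card (insert a F) / det_on (insert a F) Q)"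
    unfolding det using fin a by (simp add: real_sqrt_mult[symmetric] field_simps)
  finally show ?case using dpos by simp
qed


lemma qf_restrict:
  assumes fin: "finite V" and S: "S \<subseteq> V"
  shows "qf V A (\<lambda>i. if i \<in> S then x i else 0) = qf S A x"
proof -
  let ?x = "\<lambda>i. if i \<in> S then x i else 0"
  have inner: "(\<Sum>j\<in>V. ?x i * A i j * ?x j) = (\<Sum>j\<in>S. ?x i * A i j * ?x j)" for i
    by (rule sum.mono_neutral_right) (use fin S in auto)
  have "qf V A ?x = (\<Sum>i\<in>V. \<Sum>j\<in>S. ?x i * A i j * ?x j)" unfolding qf_def inner ..
  also have "\<dots> = (\<Sum>i\<in>S. \<Sum>j\<in>S. ?x i * A i j * ?x j)"
    by (rule sum.mono_neutral_right) (use fin S in auto)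
  also have "\<dots> = qf S A x" unfolding qf_def by (intro sum.cong refl) auto
  finally show ?thesis .
qed

lemma cov_psd:
  assumes "covariance_matrix V A" "finite V" "S \<subseteq> V"
  shows "0 \<le> qf S A x"
proof -
  have "\<forall>x. 0 \<le> (\<Sum>i\<in>V. \<Sum>j\<in>V. x i * A i j * x j)"
    using assms(1) unfolding covariance_matrix_def by blast
  from spec[OF this, of "\<lambda>i. if i \<in> S then x i else 0"]
  have "0 \<le> qf V A (\<lambda>i. if i \<in> S then x i else 0)" unfolding qf_def .
  thus ?thesis using qf_restrict[OF assms(2,3)] by simp
qed

lemma cov_sym:
  assumes "covariance_matrix V A" "S \<subseteq> V" "i \<in> S" "j \<in> S"
  shows "A i j = A j i"
  using assms unfolding covariance_matrix_def by blast

lemma qf_add: "qf S A (\<lambda>i. x i + y i) = qf S A x + (\<Sum>i\<in>S. \<Sum>j\<in>S. y i * A i j * x j)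
          + (\<Sum>i\<in>S. \<Sum>j\<in>S. x i * A i j * y j) + qf S A y"
proof -
  have "qf S A (\<lambda>i. x i + y i) = (\<Sum>i\<in>S. \<Sum>j\<in>S. x i * A i j * x j + y i * A i j * x j + x i * A i j * y j + y i * A i j * y j)"
    unfolding qf_def by (intro sum.cong refl) (simp add: algebra_simps)
  thus ?thesis unfolding qf_def by (simp only: sum.distrib)
qed

lemma psd_kernel:
  assumes fin: "finite S" and sym: "\<And>i j. i \<in> S \<Longrightarrow> j \<in> S \<Longrightarrow> A i j = A j i"
    and psd: "\<And>y. 0 \<le> qf S A y" and z: "qf S A x = 0" and k: "k \<in> S"
  shows "(\<Sum>j\<in>S. A k j * x j) = 0"
proof -
  define b where "b = (\<Sum>j\<in>S. A k j * x j)"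
  define c where "c = A k k"
  have expand: "qf S A (\<lambda>i. x i + (if i = k then t else 0)) = qf S A x + 2 * t * b + t^2 * c" for t
  proof -
    let ?d = "\<lambda>i. if i = k then t else (0::real)"
    have "qf S A (\<lambda>i. x i + ?d i) = qf S A x + (\<Sum>i\<in>S. \<Sum>j\<in>S. ?d i * A i j * x j)
          + (\<Sum>i\<in>S. \<Sum>j\<in>S. x i * A i j * ?d j) + (\<Sum>i\<in>S. \<Sum>j\<in>S. ?d i * A i j * ?d j)"
      using qf_add[of S A x "\<lambda>i. if i = k then t else 0"] unfolding qf_def[of S A "\<lambda>i. if i = k then t else 0"] by simp
    also have "(\<Sum>i\<in>S. \<Sum>j\<in>S. ?d i * A i j * x j) = t * b"
    proof -
      have "(\<Sum>j\<in>S. ?d i * A i j * x j) = (if i = k then t * b else 0)" for i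
        unfolding b_def by (auto simp: sum_distrib_left mult.assoc)
      thus ?thesis using fin k by simp
    qed
    also have "(\<Sum>i\<in>S. \<Sum>j\<in>S. x i * A i j * ?d j) = t * b"
    proof -
      have "(\<Sum>j\<in>S. x i * A i j * ?d j) = x i * A i k * t" if "i \<in> S" for i
        using fin k by (simp add: if_distrib cong: if_cong)
      hence "(\<Sum>i\<in>S. \<Sum>j\<in>S. x i * A i j * ?d j) = (\<Sum>i\<in>S. t * (A k i * x i))"
        by (intro sum.cong refl) (simp add: sym k)
      thus ?thesis unfolding b_def by (simp add: sum_distrib_left)
    qed
    also have "(\<Sum>i\<in>S. \<Sum>j\<in>S. ?d i * A i j * ?d j) = t^2 * c"
    proof -
      have "(\<Sum>j\<in>S. ?d i * A i j * ?d j) = (if i = k then t * A k k * t else 0)" for i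
        using fin k by (auto simp: if_distrib cong: if_cong)
      thus ?thesis using fin k unfolding c_def by (simp add: power2_eq_square)
    qed
    finally show ?thesis by simp
  qed
  define D where "D = \<bar>c\<bar> + 1"
  have D: "0 < D" unfolding D_def by simp
  define t where "t = - b / D"
  have "0 \<le> 2 * t * b + t^2 * c" using psd[of "\<lambda>i. x i + (if i = k then t else 0)"] expand[of t] z by simp
  hence "0 \<le> D^2 * (2 * t * b + t^2 * c)" using D by simp
  also have "D^2 * (2 * t * b + t^2 * c) = - 2 * b^2 * D + b^2 * c"
    unfolding t_def using D by (simp add: field_simps power2_eq_square)
  also have "\<dots> \<le> - 2 * b^2 * D + b^2 * (D - 1)"
    unfolding D_def by (intro add_left_mono mult_left_mono) auto
  also have "\<dots> = -(b^2 * (D + 1))" by (simp add: algebra_simps)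
  finally have "b^2 * (D + 1) \<le> 0" by simp
  hence "b^2 \<le> 0" using D by (simp add: mult_le_0_iff)
  thus ?thesis unfolding b_def by simp
qed

lemma inv_apply:
  assumes fin: "finite S" and d: "det_on S A \<noteq> 0" and i: "i \<in> S"
  shows "(\<Sum>l\<in>S. inv_on S A i l * (\<Sum>k\<in>S. A l k * x k)) = x i"
proof -
  have "(\<Sum>l\<in>S. inv_on S A i l * (\<Sum>k\<in>S. A l k * x k)) = (\<Sum>l\<in>S. \<Sum>k\<in>S. inv_on S A i l * A l k * x k)"
    by (simp add: sum_distrib_left mult.assoc)
  also have "\<dots> = (\<Sum>k\<in>S. \<Sum>l\<in>S. inv_on S A i l * A l k * x k)" by (rule sum.swap)
  also have "\<dots> = (\<Sum>k\<in>S. (\<Sum>l\<in>S. inv_on S A i l * A l k) * x k)" by (simp add: sum_distrib_right)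
  also have "\<dots> = (\<Sum>k\<in>S. if i = k then x k else 0)"
    by (intro sum.cong refl) (simp add: inv_on_left[OF fin d i])
  also have "\<dots> = x i" using fin i by simp
  finally show ?thesis .
qed

lemma apply_inv:
  assumes fin: "finite S" and d: "det_on S A \<noteq> 0" and i: "i \<in> S"
  shows "(\<Sum>l\<in>S. A i l * (\<Sum>k\<in>S. inv_on S A l k * x k)) = x i"
proof -
  have "(\<Sum>l\<in>S. A i l * (\<Sum>k\<in>S. inv_on S A l k * x k)) = (\<Sum>l\<in>S. \<Sum>k\<in>S. A i l * inv_on S A l k * x k)"
    by (simp add: sum_distrib_left mult.assoc)
  also have "\<dots> = (\<Sum>k\<in>S. \<Sum>l\<in>S. A i l * inv_on S A l k * x k)" by (rule sum.swap)
  also have "\<dots> = (\<Sum>k\<in>S. (\<Sum>l\<in>S. A i l * inv_on S A l k) * x k)" by (simp add: sum_distrib_right)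
  also have "\<dots> = (\<Sum>k\<in>S. if i = k then x k else 0)"
    by (intro sum.cong refl) (simp add: inv_on_right[OF fin d i])
  also have "\<dots> = x i" using fin i by simp
  finally show ?thesis .
qed

lemma cov_pd:
  assumes cov: "covariance_matrix V A" and finV: "finite V" and S: "S \<subseteq> V" and d: "det_on S A \<noteq> 0"
  shows "pos_def_on S A"
  unfolding pos_def_on_qf
proof (intro allI impI)
  fix x :: "'a \<Rightarrow> real" assume "\<exists>i\<in>S. x i \<noteq> 0"
  then obtain i where i: "i \<in> S" "x i \<noteq> 0" by blast
  have fin: "finite S" using finV S finite_subset by blast
  have ge: "0 \<le> qf S A x" by (rule cov_psd[OF cov finV S])
  show "0 < qf S A x"
  proof (rule ccontr)
    assume "\<not> 0 < qf S A x"
    hence z: "qf S A x = 0" using ge by simp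
    have ker: "(\<Sum>k\<in>S. A l k * x k) = 0" if "l \<in> S" for l
      by (rule psd_kernel[OF fin _ _ z that]) (use cov_sym[OF cov S] cov_psd[OF cov finV S] in auto)
    have "x i = (\<Sum>l\<in>S. inv_on S A i l * (\<Sum>k\<in>S. A l k * x k))" using inv_apply[OF fin d i(1)] by simp
    also have "\<dots> = 0" by (simp add: ker)
    finally show False using i by simp
  qed
qed

lemma inv_pd:
  assumes cov: "covariance_matrix V A" and finV: "finite V" and S: "S \<subseteq> V" and d: "det_on S A \<noteq> 0"
  shows "pos_def_on S (inv_on S A)"
  unfolding pos_def_on_qf
proof (intro allI impI)
  fix x :: "'a \<Rightarrow> real" assume "\<exists>i\<in>S. x i \<noteq> 0"
  then obtain i where i: "i \<in> S" "x i \<noteq> 0" by blast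
  have fin: "finite S" using finV S finite_subset by blast
  define B where "B = inv_on S A"
  define z where "z = (\<lambda>l. \<Sum>k\<in>S. B l k * x k)"
  have Az: "(\<Sum>l\<in>S. A j l * z l) = x j" if "j \<in> S" for j
    unfolding z_def B_def by (rule apply_inv[OF fin d that])
  have "qf S A z = (\<Sum>j\<in>S. z j * (\<Sum>l\<in>S. A j l * z l))"
    unfolding qf_def by (simp add: sum_distrib_left mult.assoc)
  also have "\<dots> = (\<Sum>j\<in>S. z j * x j)" by (intro sum.cong refl) (simp add: Az)
  also have "\<dots> = qf S B x"
  proof -
    have "(\<Sum>j\<in>S. z j * x j) = (\<Sum>j\<in>S. \<Sum>k\<in>S. x k * B k j * x j)"
      unfolding z_def B_def
      by (intro sum.cong refl) (simp add: sum_distrib_left sum_distrib_right inv_on_sym[OF fin d cov_sym[OF cov S]] mult.commute mult.left_commute)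
    also have "\<dots> = qf S B x" unfolding qf_def by (rule sum.swap)
    finally show ?thesis .
  qed
  finally have eq: "qf S A z = qf S B x" .
  have "\<exists>j\<in>S. z j \<noteq> 0"
  proof (rule ccontr)
    assume "\<not> (\<exists>j\<in>S. z j \<noteq> 0)"
    hence "x i = 0" using Az[OF i(1)] by simp
    thus False using i by simp
  qed
  hence "0 < qf S A z" using cov_pd[OF cov finV S d] unfolding pos_def_on_qf by blast
  thus "0 < qf S (inv_on S A) x" using eq unfolding B_def by simp
qed


lemma cov_det:
  assumes cov: "covariance_matrix V A" and finV: "finite V" and S: "S \<subseteq> V" and d: "det_on S A \<noteq> 0"
  shows "0 < det_on S (inv_on S A)" "0 < det_on S A" "det_on S (inv_on S A) * det_on S A = 1"
proof -
  have fin: "finite S" using finV S finite_subset by blast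
  have symB: "\<forall>i\<in>S. \<forall>j\<in>S. inv_on S A i j = inv_on S A j i"
    using inv_on_sym[OF fin d cov_sym[OF cov S]] by blast
  from gauss_int[OF fin symB inv_pd[OF cov finV S d]]
  show p: "0 < det_on S (inv_on S A)" by blast
  show e: "det_on S (inv_on S A) * det_on S A = 1" by (rule det_inv_on[OF fin d])
  have "det_on S A = 1 / det_on S (inv_on S A)" using e p by (simp add: field_simps)
  thus "0 < det_on S A" using p by simp
qed

lemma gd_qf: "gauss_density S A x = exp (-(1/2) * qf S (inv_on S A) x) / sqrt ((2*pi)^card S * det_on S A)"
  unfolding gauss_density_def qf_def by simp

lemma gd_nonneg:
  assumes "covariance_matrix V A" "finite V" "S \<subseteq> V" "det_on S A \<noteq> 0"
  shows "0 \<le> gauss_density S A x"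
  using cov_det(2)[OF assms] unfolding gd_qf by simp

lemma gd_int:
  assumes cov: "covariance_matrix V A" and finV: "finite V" and S: "S \<subseteq> V" and d: "det_on S A \<noteq> 0"
  shows "(\<integral>\<^sup>+x. ennreal (gauss_density S A x) \<partial>PiM S (\<lambda>_. lborel)) = 1"
proof -
  have fin: "finite S" using finV S finite_subset by blast
  have symB: "\<forall>i\<in>S. \<forall>j\<in>S. inv_on S A i j = inv_on S A j i"
    using inv_on_sym[OF fin d cov_sym[OF cov S]] by blast
  note G = gauss_int[OF fin symB inv_pd[OF cov finV S d]]
  note D = cov_det[OF cov finV S d]
  define c where "c = 1 / sqrt ((2*pi)^card S * det_on S A)"
  have c: "0 \<le> c" unfolding c_def using D by simp
  have "(\<integral>\<^sup>+x. ennreal (gauss_density S A x) \<partial>PiM S (\<lambda>_. lborel))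
      = (\<integral>\<^sup>+x. ennreal c * ennreal (exp (-(1/2) * qf S (inv_on S A) x)) \<partial>PiM S (\<lambda>_. lborel))"
  proof (intro nn_integral_cong)
    fix x :: "'a \<Rightarrow> real"
    have "gauss_density S A x = c * exp (-(1/2) * qf S (inv_on S A) x)" unfolding gd_qf c_def by simp
    thus "ennreal (gauss_density S A x) = ennreal c * ennreal (exp (-(1/2) * qf S (inv_on S A) x))"
      by (simp add: ennreal_mult c)
  qed
  also have "\<dots> = ennreal c * (\<integral>\<^sup>+x. ennreal (exp (-(1/2) * qf S (inv_on S A) x)) \<partial>PiM S (\<lambda>_. lborel))"
    by (rule nn_integral_cmult) (use meas_qf in measurable)
  also have "\<dots> = ennreal (c * sqrt ((2*pi)^card S / det_on S (inv_on S A)))"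
    using G c by (simp add: ennreal_mult)
  also have "c * sqrt ((2*pi)^card S / det_on S (inv_on S A)) = 1"
  proof -
    have "det_on S (inv_on S A) = 1 / det_on S A" using D by (simp add: field_simps)
    hence "sqrt ((2*pi)^card S / det_on S (inv_on S A)) = sqrt ((2*pi)^card S * det_on S A)" by simp
    moreover have "0 < sqrt ((2*pi)^card S * det_on S A)" using D by simp
    ultimately show ?thesis unfolding c_def using D by simp
  qed
  finally show ?thesis by simp
qed

lemma ps:
  fixes f g :: "('a \<Rightarrow> real) \<Rightarrow> ennreal"
  assumes finV: "finite V" and S: "S \<subseteq> V"
    and fm: "f \<in> borel_measurable (PiM S (\<lambda>_. lborel))" and gm: "g \<in> borel_measurable (PiM (V - S) (\<lambda>_. lborel))"
    and fdep: "\<And>x y. (\<forall>i\<in>S. x i = y i) \<Longrightarrow> f x = f y"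
    and gdep: "\<And>x y. (\<forall>i\<in>V - S. x i = y i) \<Longrightarrow> g x = g y"
  shows "(\<integral>\<^sup>+x. f x * g x \<partial>PiM V (\<lambda>_. lborel)) = (\<integral>\<^sup>+x. f x \<partial>PiM S (\<lambda>_. lborel)) * (\<integral>\<^sup>+x. g x \<partial>PiM (V - S) (\<lambda>_. lborel))"
proof -
  interpret product_sigma_finite "\<lambda>_::'a. lborel" by (rule psf)
  have finS: "finite S" using finV S finite_subset by blast
  have VS: "S \<union> (V - S) = V" using S by auto
  have f': "(\<lambda>x. f x) = (\<lambda>x. f (restrict x S))" by (rule ext) (rule fdep, auto)
  have g': "(\<lambda>x. g x) = (\<lambda>x. g (restrict x (V - S)))" by (rule ext) (rule gdep, auto)
  have fmV: "f \<in> borel_measurable (PiM (S \<union> (V - S)) (\<lambda>_. lborel))"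
    by (subst f') (rule measurable_compose[OF measurable_restrict_subset fm], auto)
  have gmV: "g \<in> borel_measurable (PiM (S \<union> (V - S)) (\<lambda>_. lborel))"
    by (subst g') (rule measurable_compose[OF measurable_restrict_subset gm], auto)
  have "(\<integral>\<^sup>+x. f x * g x \<partial>PiM (S \<union> (V - S)) (\<lambda>_. lborel))
      = (\<integral>\<^sup>+x. (\<integral>\<^sup>+y. f (merge S (V - S) (x, y)) * g (merge S (V - S) (x, y)) \<partial>PiM (V - S) (\<lambda>_. lborel)) \<partial>PiM S (\<lambda>_. lborel))"
    by (rule product_nn_integral_fold) (use finS finV fmV gmV in auto)
  also have "\<dots> = (\<integral>\<^sup>+x. (\<integral>\<^sup>+y. f x * g y \<partial>PiM (V - S) (\<lambda>_. lborel)) \<partial>PiM S (\<lambda>_. lborel))"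
  proof (intro nn_integral_cong)
    fix x y :: "'a \<Rightarrow> real"
    have "f (merge S (V - S) (x, y)) = f x" by (rule fdep) (auto simp: merge_def)
    moreover have "g (merge S (V - S) (x, y)) = g y" by (rule gdep) (auto simp: merge_def)
    ultimately show "f (merge S (V - S) (x, y)) * g (merge S (V - S) (x, y)) = f x * g y" by simp
  qed
  also have "\<dots> = (\<integral>\<^sup>+x. f x * (\<integral>\<^sup>+y. g y \<partial>PiM (V - S) (\<lambda>_. lborel)) \<partial>PiM S (\<lambda>_. lborel))"
    by (intro nn_integral_cong nn_integral_cmult gm)
  also have "\<dots> = (\<integral>\<^sup>+x. f x \<partial>PiM S (\<lambda>_. lborel)) * (\<integral>\<^sup>+y. g y \<partial>PiM (V - S) (\<lambda>_. lborel))"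
    by (rule nn_integral_multc[OF fm])
  finally show ?thesis unfolding VS .
qed

lemma std_prod_int:
  assumes "finite W"
  shows "(\<integral>\<^sup>+x. ennreal (\<Prod>i\<in>W. std_normal_density (x i)) \<partial>PiM W (\<lambda>_. lborel)) = 1"
proof -
  interpret product_sigma_finite "\<lambda>_::'a. lborel" by (rule psf)
  have "(\<integral>\<^sup>+x. ennreal (\<Prod>i\<in>W. std_normal_density (x i)) \<partial>PiM W (\<lambda>_. lborel))
      = (\<integral>\<^sup>+x. (\<Prod>i\<in>W. ennreal (std_normal_density (x i))) \<partial>PiM W (\<lambda>_. lborel))"
    by (intro nn_integral_cong) (simp add: prod_ennreal)
  also have "\<dots> = (\<Prod>i\<in>W. (\<integral>\<^sup>+y. ennreal (std_normal_density y) \<partial>lborel))"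
    by (rule product_nn_integral_prod) (use assms in auto)
  also have "\<dots> = 1" by (simp add: nn_integral_normal)
  finally show ?thesis .
qed


definition p0 :: "'a set \<Rightarrow> ('a \<Rightarrow> real) \<Rightarrow> real" where
  "p0 V x = (\<Prod>i\<in>V. std_normal_density (x i))"

definition gd :: "'a set \<Rightarrow> 'a set \<Rightarrow> ('a \<Rightarrow> 'a \<Rightarrow> real) \<Rightarrow> ('a \<Rightarrow> real) \<Rightarrow> real" where
  "gd V S A x = gauss_density S A x * (\<Prod>i\<in>V - S. std_normal_density (x i))"

lemma p0_pos: "0 < p0 V x"
  unfolding p0_def by (intro prod_pos) (simp add: normal_density_pos)

lemma meas_qf_sub: "S \<subseteq> I \<Longrightarrow> (\<lambda>x. qf S Q x) \<in> borel_measurable (PiM I (\<lambda>_. lborel))"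
  unfolding qf_def
  by (intro borel_measurable_sum borel_measurable_times borel_measurable_const meas_comp) auto

lemma meas_stdprod: "W \<subseteq> I \<Longrightarrow> (\<lambda>x. \<Prod>i\<in>W. std_normal_density (x i)) \<in> borel_measurable (PiM I (\<lambda>_. lborel))"
  by (intro borel_measurable_prod measurable_compose[OF meas_comp borel_measurable_normal_density]) auto

lemma meas_gauss_density: "S \<subseteq> I \<Longrightarrow> (\<lambda>x. gauss_density S A x) \<in> borel_measurable (PiM I (\<lambda>_. lborel))"
  unfolding gd_qf using meas_qf_sub[of S I "inv_on S A"] by measurable

lemma gauss_density_dep: "(\<forall>i\<in>S. x i = y i) \<Longrightarrow> gauss_density S A x = gauss_density S A y"
  unfolding gauss_density_def by (simp cong: sum.cong)

lemma gd_int_V: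
  assumes cov: "covariance_matrix V A" and finV: "finite V" and S: "S \<subseteq> V" and d: "det_on S A \<noteq> 0"
  shows "(\<integral>\<^sup>+x. ennreal (gd V S A x) \<partial>PiM V (\<lambda>_. lborel)) = 1"
proof -
  have "(\<integral>\<^sup>+x. ennreal (gd V S A x) \<partial>PiM V (\<lambda>_. lborel))
      = (\<integral>\<^sup>+x. ennreal (gauss_density S A x) * ennreal (\<Prod>i\<in>V - S. std_normal_density (x i)) \<partial>PiM V (\<lambda>_. lborel))"
    unfolding gd_def using gd_nonneg[OF cov finV S d]
    by (intro nn_integral_cong) (simp add: ennreal_mult prod_nonneg)
  also have "\<dots> = (\<integral>\<^sup>+x. ennreal (gauss_density S A x) \<partial>PiM S (\<lambda>_. lborel)) *
                  (\<integral>\<^sup>+x. ennreal (\<Prod>i\<in>V - S. std_normal_density (x i)) \<partial>PiM (V - S) (\<lambda>_. lborel))"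
  proof (rule ps[OF finV S])
    show "(\<lambda>x. ennreal (gauss_density S A x)) \<in> borel_measurable (PiM S (\<lambda>_. lborel))"
      using meas_gauss_density[of S S A] by measurable
    show "(\<lambda>x. ennreal (\<Prod>i\<in>V - S. std_normal_density (x i))) \<in> borel_measurable (PiM (V - S) (\<lambda>_. lborel))"
      using meas_stdprod[of "V - S" "V - S"] by measurable
    show "\<And>x y. \<forall>i\<in>S. x i = y i \<Longrightarrow> ennreal (gauss_density S A x) = ennreal (gauss_density S A y)"
      using gauss_density_dep by metis
    fix x y :: "'a \<Rightarrow> real" assume h: "\<forall>i\<in>V - S. x i = y i"
    have "(\<Prod>i\<in>V - S. std_normal_density (x i)) = (\<Prod>i\<in>V - S. std_normal_density (y i))"
      using h by (intro prod.cong) auto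
    thus "ennreal (\<Prod>i\<in>V - S. std_normal_density (x i)) = ennreal (\<Prod>i\<in>V - S. std_normal_density (y i))" by simp
  qed
  also have "\<dots> = 1" using gd_int[OF cov finV S d] std_prod_int[of "V - S"] finV by simp
  finally show ?thesis .
qed


lemma prod_std_S:
  assumes "finite S"
  shows "(\<Prod>i\<in>S. std_normal_density (x i)) = (1 / sqrt (2*pi))^card S * exp (-(1/2) * (\<Sum>i\<in>S. (x i)^2))"
proof -
  have "(\<Prod>i\<in>S. std_normal_density (x i)) = (\<Prod>i\<in>S. (1 / sqrt (2*pi)) * exp (-(1/2) * (x i)^2))"
    by (intro prod.cong refl) (simp add: std_normal_density_def)
  also have "\<dots> = (1 / sqrt (2*pi))^card S * (\<Prod>i\<in>S. exp (-(1/2) * (x i)^2))"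
    by (simp only: prod.distrib prod_constant)
  also have "(\<Prod>i\<in>S. exp (-(1/2) * (x i)^2)) = exp (\<Sum>i\<in>S. -(1/2) * (x i)^2)"
    using assms by (simp add: exp_sum)
  also have "(\<Sum>i\<in>S. -(1/2) * (x i)^2) = -(1/2) * (\<Sum>i\<in>S. (x i)^2)"
    by (simp add: sum_distrib_left)
  finally show ?thesis .
qed

lemma qf_Q:
  assumes "finite S"
  shows "qf S (\<lambda>i j. B1 i j + B2 i j - (if i = j then 1 else 0)) x = qf S B1 x + qf S B2 x - (\<Sum>i\<in>S. (x i)^2)"
proof -
  have "qf S (\<lambda>i j. B1 i j + B2 i j - (if i = j then 1 else 0)) x
      = (\<Sum>i\<in>S. (\<Sum>j\<in>S. x i * B1 i j * x j) + (\<Sum>j\<in>S. x i * B2 i j * x j) - (\<Sum>j\<in>S. if i = j then x i * x j else 0))"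
    unfolding qf_def
  proof (intro sum.cong refl)
    fix i
    have "(\<Sum>j\<in>S. x i * (B1 i j + B2 i j - (if i = j then 1 else 0)) * x j)
        = (\<Sum>j\<in>S. x i * B1 i j * x j + x i * B2 i j * x j - (if i = j then x i * x j else 0))"
      by (intro sum.cong refl) (auto simp: algebra_simps)
    also have "\<dots> = (\<Sum>j\<in>S. x i * B1 i j * x j) + (\<Sum>j\<in>S. x i * B2 i j * x j) - (\<Sum>j\<in>S. if i = j then x i * x j else 0)"
      by (simp only: sum.distrib sum_subtractf)
    finally show "(\<Sum>j\<in>S. x i * (B1 i j + B2 i j - (if i = j then 1 else 0)) * x j)
        = (\<Sum>j\<in>S. x i * B1 i j * x j) + (\<Sum>j\<in>S. x i * B2 i j * x j) - (\<Sum>j\<in>S. if i = j then x i * x j else 0)" .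
  qed
  also have "\<dots> = (\<Sum>i\<in>S. (\<Sum>j\<in>S. x i * B1 i j * x j) + (\<Sum>j\<in>S. x i * B2 i j * x j) - (x i)^2)"
    using assms by (intro sum.cong refl) (simp add: power2_eq_square)
  also have "\<dots> = qf S B1 x + qf S B2 x - (\<Sum>i\<in>S. (x i)^2)"
    unfolding qf_def by (simp add: sum.distrib sum_subtractf)
  finally show ?thesis .
qed


lemma K_same:
  assumes cov1: "covariance_matrix V A1" and cov2: "covariance_matrix V A2" and finV: "finite V"
    and S: "S \<subseteq> V" and d1: "det_on S A1 \<noteq> 0" and d2: "det_on S A2 \<noteq> 0"
    and Q: "Q = (\<lambda>i j. inv_on S A1 i j + inv_on S A2 i j - (if i = j then 1 else 0))"
    and pd: "pos_def_on S Q"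
  shows "(\<integral>\<^sup>+x. ennreal (gd V S A1 x) * ennreal (gd V S A2 x) * ennreal (1 / p0 V x) \<partial>PiM V (\<lambda>_. lborel))
       = ennreal (sqrt (det_on S (inv_on S A1) * det_on S (inv_on S A2) / det_on S Q))"
proof -
  have fin: "finite S" using finV S finite_subset by blast
  let ?k = "card S"
  define s1 where "s1 = sqrt ((2*pi)^?k * det_on S A1)"
  define s2 where "s2 = sqrt ((2*pi)^?k * det_on S A2)"
  note D1 = cov_det[OF cov1 finV S d1] and D2 = cov_det[OF cov2 finV S d2]
  have s1: "0 < s1" and s2: "0 < s2" unfolding s1_def s2_def using D1 D2 by auto
  define c where "c = sqrt (2*pi)^?k / (s1 * s2)"
  have c: "0 < c" unfolding c_def using s1 s2 by simp
  define P where "P = (\<lambda>x. \<Prod>i\<in>V - S. std_normal_density (x i))"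
  have P: "0 < P x" for x unfolding P_def by (intro prod_pos) (simp add: normal_density_pos)
  have symQ: "\<forall>i\<in>S. \<forall>j\<in>S. Q i j = Q j i"
    unfolding Q using inv_on_sym[OF fin d1 cov_sym[OF cov1 S]] inv_on_sym[OF fin d2 cov_sym[OF cov2 S]] by auto
  note G = gauss_int[OF fin symQ pd]
  have pw: "gd V S A1 x * gd V S A2 x * (1 / p0 V x) = c * exp (-(1/2) * qf S Q x) * P x" for x
  proof -
    define X where "X = (\<Sum>i\<in>S. (x i)^2)"
    define e1 where "e1 = exp (-(1/2) * qf S (inv_on S A1) x)"
    define e2 where "e2 = exp (-(1/2) * qf S (inv_on S A2) x)"
    have eQ: "exp (-(1/2) * qf S Q x) = e1 * e2 / exp (-(1/2) * X)"
      unfolding Q qf_Q[OF fin] e1_def e2_def X_def by (simp add: exp_add[symmetric] exp_diff[symmetric] algebra_simps)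
    have p0: "p0 V x = (1 / sqrt (2*pi))^?k * exp (-(1/2) * X) * P x"
      unfolding p0_def P_def X_def using prod.subset_diff[OF S finV, of "\<lambda>i. std_normal_density (x i)"]
      by (simp add: prod_std_S[OF fin] mult.commute)
    have g1: "gd V S A1 x = e1 / s1 * P x" unfolding gd_def gd_qf e1_def s1_def P_def by simp
    have g2: "gd V S A2 x = e2 / s2 * P x" unfolding gd_def gd_qf e2_def s2_def P_def by simp
    have pi: "0 < sqrt (2*pi)" by simp
    show ?thesis unfolding g1 g2 p0 eQ c_def using s1 s2 P[of x] pi
      by (simp add: field_simps power_one_over)
  qed
  have "(\<integral>\<^sup>+x. ennreal (gd V S A1 x) * ennreal (gd V S A2 x) * ennreal (1 / p0 V x) \<partial>PiM V (\<lambda>_. lborel))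
      = (\<integral>\<^sup>+x. ennreal (c * exp (-(1/2) * qf S Q x)) * ennreal (P x) \<partial>PiM V (\<lambda>_. lborel))"
  proof (intro nn_integral_cong)
    fix x
    have n1: "0 \<le> gd V S A1 x" unfolding gd_def using gd_nonneg[OF cov1 finV S d1]
      by (intro mult_nonneg_nonneg prod_nonneg) auto
    have n2: "0 \<le> gd V S A2 x" unfolding gd_def using gd_nonneg[OF cov2 finV S d2]
      by (intro mult_nonneg_nonneg prod_nonneg) auto
    have "ennreal (gd V S A1 x * gd V S A2 x * (1 / p0 V x)) = ennreal (gd V S A1 x * gd V S A2 x) * ennreal (1 / p0 V x)"
      by (rule ennreal_mult) (use n1 n2 p0_pos[of V x] in auto)
    also have "ennreal (gd V S A1 x * gd V S A2 x) = ennreal (gd V S A1 x) * ennreal (gd V S A2 x)"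
      by (rule ennreal_mult) (use n1 n2 in auto)
    finally have "ennreal (gd V S A1 x) * ennreal (gd V S A2 x) * ennreal (1 / p0 V x) = ennreal (gd V S A1 x * gd V S A2 x * (1 / p0 V x))" by simp
    also have "\<dots> = ennreal (c * exp (-(1/2) * qf S Q x)) * ennreal (P x)"
      unfolding pw using c P[of x] by (simp add: ennreal_mult)
    finally show "ennreal (gd V S A1 x) * ennreal (gd V S A2 x) * ennreal (1 / p0 V x) = ennreal (c * exp (-(1/2) * qf S Q x)) * ennreal (P x)" .
  qed
  also have "\<dots> = (\<integral>\<^sup>+x. ennreal (c * exp (-(1/2) * qf S Q x)) \<partial>PiM S (\<lambda>_. lborel)) * (\<integral>\<^sup>+x. ennreal (P x) \<partial>PiM (V - S) (\<lambda>_. lborel))"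
  proof (rule ps[OF finV S])
    show "(\<lambda>x. ennreal (c * exp (-(1/2) * qf S Q x))) \<in> borel_measurable (PiM S (\<lambda>_. lborel))"
      using meas_qf[of S Q] by measurable
    show "(\<lambda>x. ennreal (P x)) \<in> borel_measurable (PiM (V - S) (\<lambda>_. lborel))"
      unfolding P_def using meas_stdprod[of "V - S" "V - S"] by measurable
    fix x y :: "'a \<Rightarrow> real"
    show "\<forall>i\<in>S. x i = y i \<Longrightarrow> ennreal (c * exp (-(1/2) * qf S Q x)) = ennreal (c * exp (-(1/2) * qf S Q y))"
      using qf_cong[of S x y Q] by simp
    assume h: "\<forall>i\<in>V - S. x i = y i"
    have "P x = P y" unfolding P_def using h by (intro prod.cong) auto
    thus "ennreal (P x) = ennreal (P y)" by simp
  qed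
  also have "(\<integral>\<^sup>+x. ennreal (P x) \<partial>PiM (V - S) (\<lambda>_. lborel)) = 1"
    unfolding P_def by (rule std_prod_int) (use finV in auto)
  also have "(\<integral>\<^sup>+x. ennreal (c * exp (-(1/2) * qf S Q x)) \<partial>PiM S (\<lambda>_. lborel))
      = ennreal c * (\<integral>\<^sup>+x. ennreal (exp (-(1/2) * qf S Q x)) \<partial>PiM S (\<lambda>_. lborel))"
  proof -
    have "(\<integral>\<^sup>+x. ennreal (c * exp (-(1/2) * qf S Q x)) \<partial>PiM S (\<lambda>_. lborel))
        = (\<integral>\<^sup>+x. ennreal c * ennreal (exp (-(1/2) * qf S Q x)) \<partial>PiM S (\<lambda>_. lborel))"
      using c by (intro nn_integral_cong) (simp add: ennreal_mult)
    also have "\<dots> = ennreal c * (\<integral>\<^sup>+x. ennreal (exp (-(1/2) * qf S Q x)) \<partial>PiM S (\<lambda>_. lborel))"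
      by (rule nn_integral_cmult) (use meas_qf[of S Q] in measurable)
    finally show ?thesis .
  qed
  also have "\<dots> = ennreal (c * sqrt ((2*pi)^?k / det_on S Q))"
    using G c by (simp add: ennreal_mult)
  also have "c * sqrt ((2*pi)^?k / det_on S Q) = sqrt (det_on S (inv_on S A1) * det_on S (inv_on S A2) / det_on S Q)"
  proof -
    have b1: "det_on S (inv_on S A1) = 1 / det_on S A1" using D1 by (simp add: field_simps)
    have b2: "det_on S (inv_on S A2) = 1 / det_on S A2" using D2 by (simp add: field_simps)
    have "sqrt ((2*pi)^?k) = sqrt (2*pi)^?k" by (rule real_sqrt_power)
    moreover have "0 < sqrt (2*pi)^?k" by simp
    ultimately show ?thesis unfolding c_def s1_def s2_def b1 b2 using D1(2) D2(2) G
      by (simp add: real_sqrt_mult real_sqrt_divide field_simps)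
  qed
  finally show ?thesis by simp
qed


lemma gd_nonneg2:
  assumes "covariance_matrix V A" "finite V" "S \<subseteq> V" "det_on S A \<noteq> 0"
  shows "0 \<le> gd V S A x"
  unfolding gd_def using gd_nonneg[OF assms]
  by (intro mult_nonneg_nonneg prod_nonneg) auto

lemma K_diff:
  assumes cov1: "covariance_matrix V A1" and cov2: "covariance_matrix V A2" and finV: "finite V"
    and S: "S \<subseteq> V" and S': "S' \<subseteq> V" and disj: "S \<inter> S' = {}"
    and d1: "det_on S A1 \<noteq> 0" and d2: "det_on S' A2 \<noteq> 0"
  shows "(\<integral>\<^sup>+x. ennreal (gd V S A1 x) * ennreal (gd V S' A2 x) * ennreal (1 / p0 V x) \<partial>PiM V (\<lambda>_. lborel)) = 1"
proof -
  define W where "W = V - S - S'"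
  define P where "P = (\<lambda>(T::'a set) (x::'a \<Rightarrow> real). \<Prod>i\<in>T. std_normal_density (x i))"
  have finW: "finite W" unfolding W_def using finV by simp
  have finS: "finite S" and finS': "finite S'" using finV S S' finite_subset by blast+
  have Pp: "0 < P T x" for T x unfolding P_def by (intro prod_pos) (simp add: normal_density_pos)
  have e1: "P (V - S) x = P S' x * P W x" for x
  proof -
    have u: "V - S = S' \<union> W" unfolding W_def using S' disj by auto
    have i: "S' \<inter> W = {}" unfolding W_def by auto
    show ?thesis unfolding u P_def by (rule prod.union_disjoint[OF finS' finW i])
  qed
  have e2: "P (V - S') x = P S x * P W x" for x
  proof -
    have u: "V - S' = S \<union> W" unfolding W_def using S disj by auto
    have i: "S \<inter> W = {}" unfolding W_def by auto
    show ?thesis unfolding u P_def by (rule prod.union_disjoint[OF finS finW i])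
  qed
  have e3: "P V x = P S x * (P S' x * P W x)" for x
  proof -
    have u: "V = S \<union> (S' \<union> W)" unfolding W_def using S S' by auto
    have i: "S \<inter> (S' \<union> W) = {}" unfolding W_def using disj by auto
    have i2: "S' \<inter> W = {}" unfolding W_def by auto
    have "P V x = P S x * P (S' \<union> W) x" unfolding P_def
      by (subst u) (rule prod.union_disjoint[OF finS _ i], use finS' finW in auto)
    also have "P (S' \<union> W) x = P S' x * P W x" unfolding P_def by (rule prod.union_disjoint[OF finS' finW i2])
    finally show ?thesis .
  qed
  have pw: "gd V S A1 x * gd V S' A2 x * (1 / p0 V x) = gauss_density S A1 x * (gauss_density S' A2 x * P W x)" for x
  proof -
    have "gd V S A1 x * gd V S' A2 x * (1 / p0 V x)
        = gauss_density S A1 x * P (V - S) x * (gauss_density S' A2 x * P (V - S') x) / P V x"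
      unfolding gd_def p0_def P_def by simp
    also have "\<dots> = gauss_density S A1 x * (gauss_density S' A2 x * P W x)"
      unfolding e1 e2 e3 using Pp[of S x] Pp[of S' x] Pp[of W x] by (simp add: field_simps)
    finally show ?thesis .
  qed
  have n1: "0 \<le> gauss_density S A1 x" for x by (rule gd_nonneg[OF cov1 finV S d1])
  have n2: "0 \<le> gauss_density S' A2 x" for x by (rule gd_nonneg[OF cov2 finV S' d2])
  have "(\<integral>\<^sup>+x. ennreal (gd V S A1 x) * ennreal (gd V S' A2 x) * ennreal (1 / p0 V x) \<partial>PiM V (\<lambda>_. lborel))
      = (\<integral>\<^sup>+x. ennreal (gauss_density S A1 x) * ennreal (gauss_density S' A2 x * P W x) \<partial>PiM V (\<lambda>_. lborel))"
  proof (intro nn_integral_cong)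
    fix x
    have a: "0 \<le> gd V S A1 x" by (rule gd_nonneg2[OF cov1 finV S d1])
    have b: "0 \<le> gd V S' A2 x" by (rule gd_nonneg2[OF cov2 finV S' d2])
    have "ennreal (gd V S A1 x * gd V S' A2 x * (1 / p0 V x)) = ennreal (gd V S A1 x * gd V S' A2 x) * ennreal (1 / p0 V x)"
      by (rule ennreal_mult) (use a b p0_pos[of V x] in auto)
    also have "ennreal (gd V S A1 x * gd V S' A2 x) = ennreal (gd V S A1 x) * ennreal (gd V S' A2 x)"
      by (rule ennreal_mult) (use a b in auto)
    finally have "ennreal (gd V S A1 x) * ennreal (gd V S' A2 x) * ennreal (1 / p0 V x)
        = ennreal (gauss_density S A1 x * (gauss_density S' A2 x * P W x))" unfolding pw by simp
    also have "\<dots> = ennreal (gauss_density S A1 x) * ennreal (gauss_density S' A2 x * P W x)"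
      by (rule ennreal_mult) (use n1 n2 Pp[of W x] in auto)
    finally show "ennreal (gd V S A1 x) * ennreal (gd V S' A2 x) * ennreal (1 / p0 V x)
        = ennreal (gauss_density S A1 x) * ennreal (gauss_density S' A2 x * P W x)" .
  qed
  also have "\<dots> = (\<integral>\<^sup>+x. ennreal (gauss_density S A1 x) \<partial>PiM S (\<lambda>_. lborel)) *
                  (\<integral>\<^sup>+x. ennreal (gauss_density S' A2 x * P W x) \<partial>PiM (V - S) (\<lambda>_. lborel))"
  proof (rule ps[OF finV S])
    show "(\<lambda>x. ennreal (gauss_density S A1 x)) \<in> borel_measurable (PiM S (\<lambda>_. lborel))"
      using meas_gauss_density[of S S A1] by measurable
    have "S' \<subseteq> V - S" "W \<subseteq> V - S" unfolding W_def using S' disj by auto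
    thus "(\<lambda>x. ennreal (gauss_density S' A2 x * P W x)) \<in> borel_measurable (PiM (V - S) (\<lambda>_. lborel))"
      unfolding P_def using meas_gauss_density[of S' "V - S" A2] meas_stdprod[of W "V - S"] by measurable
    fix x y :: "'a \<Rightarrow> real"
    show "\<forall>i\<in>S. x i = y i \<Longrightarrow> ennreal (gauss_density S A1 x) = ennreal (gauss_density S A1 y)"
      using gauss_density_dep[of S x y A1] by simp
    assume h: "\<forall>i\<in>V - S. x i = y i"
    have "gauss_density S' A2 x = gauss_density S' A2 y"
      by (rule gauss_density_dep) (use h S' disj in auto)
    moreover have "P W x = P W y" unfolding P_def W_def using h by (intro prod.cong) auto
    ultimately show "ennreal (gauss_density S' A2 x * P W x) = ennreal (gauss_density S' A2 y * P W y)" by simp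
  qed
  also have "(\<integral>\<^sup>+x. ennreal (gauss_density S A1 x) \<partial>PiM S (\<lambda>_. lborel)) = 1"
    by (rule gd_int[OF cov1 finV S d1])
  also have "(\<integral>\<^sup>+x. ennreal (gauss_density S' A2 x * P W x) \<partial>PiM (V - S) (\<lambda>_. lborel)) = 1"
  proof -
    have S'2: "S' \<subseteq> V - S" using S' disj by auto
    have W2: "V - S - S' = W" unfolding W_def ..
    have "(\<integral>\<^sup>+x. ennreal (gauss_density S' A2 x * P W x) \<partial>PiM (V - S) (\<lambda>_. lborel))
        = (\<integral>\<^sup>+x. ennreal (gauss_density S' A2 x) * ennreal (P (V - S - S') x) \<partial>PiM (V - S) (\<lambda>_. lborel))"
      unfolding W2 using n2 Pp by (intro nn_integral_cong) (simp add: ennreal_mult less_imp_le)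
    also have "\<dots> = (\<integral>\<^sup>+x. ennreal (gauss_density S' A2 x) \<partial>PiM S' (\<lambda>_. lborel)) *
                  (\<integral>\<^sup>+x. ennreal (P (V - S - S') x) \<partial>PiM (V - S - S') (\<lambda>_. lborel))"
    proof (rule ps)
      show "finite (V - S)" using finV by simp
      show "S' \<subseteq> V - S" by (rule S'2)
      show "(\<lambda>x. ennreal (gauss_density S' A2 x)) \<in> borel_measurable (PiM S' (\<lambda>_. lborel))"
        using meas_gauss_density[of S' S' A2] by measurable
      show "(\<lambda>x. ennreal (P (V - S - S') x)) \<in> borel_measurable (PiM (V - S - S') (\<lambda>_. lborel))"
        unfolding P_def using meas_stdprod[of "V - S - S'" "V - S - S'"] by measurable
      fix x y :: "'a \<Rightarrow> real"
      show "\<forall>i\<in>S'. x i = y i \<Longrightarrow> ennreal (gauss_density S' A2 x) = ennreal (gauss_density S' A2 y)"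
        using gauss_density_dep[of S' x y A2] by simp
      assume h: "\<forall>i\<in>V - S - S'. x i = y i"
      have "P (V - S - S') x = P (V - S - S') y" unfolding P_def using h by (intro prod.cong) auto
      thus "ennreal (P (V - S - S') x) = ennreal (P (V - S - S') y)" by simp
    qed
    also have "(\<integral>\<^sup>+x. ennreal (gauss_density S' A2 x) \<partial>PiM S' (\<lambda>_. lborel)) = 1"
      by (rule gd_int[OF cov2 finV S' d2])
    also have "(\<integral>\<^sup>+x. ennreal (P (V - S - S') x) \<partial>PiM (V - S - S') (\<lambda>_. lborel)) = 1"
      unfolding P_def by (rule std_prod_int) (use finV in auto)
    finally show ?thesis by simp
  qed
  finally show ?thesis by simp
qed


lemma meas_gauss_joint:
  assumes fin: "finite S" and SI: "S \<subseteq> I" and d: "\<forall>\<phi>\<in>space N. det_on S (F \<phi>) \<noteq> 0"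
    and m: "\<And>i j. (\<lambda>\<phi>. F \<phi> i j) \<in> borel_measurable N"
  shows "(\<lambda>z. gauss_density S (F (fst z)) (snd z)) \<in> borel_measurable (N \<Otimes>\<^sub>M PiM I (\<lambda>_. lborel))"
proof -
  let ?P = "N \<Otimes>\<^sub>M PiM I (\<lambda>_. lborel)"
  have mF: "(\<lambda>z. F (fst z) i j) \<in> borel_measurable ?P" for i j
    by (rule measurable_compose[OF measurable_fst m])
  have mc: "(\<lambda>z. snd z i) \<in> borel_measurable ?P" if "i \<in> S" for i
    by (rule measurable_compose[OF measurable_snd meas_comp]) (use that SI in auto)
  define E where "E = (\<lambda>z. exp (-(1/2) * (\<Sum>i\<in>S. \<Sum>j\<in>S. snd z i * invF S (F (fst z)) i j * snd z j))
            / sqrt ((2*pi)^card S * det_on S (F (fst z))))"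
  have q: "(\<lambda>z. \<Sum>i\<in>S. \<Sum>j\<in>S. snd z i * invF S (F (fst z)) i j * snd z j) \<in> borel_measurable ?P"
    by (intro borel_measurable_sum borel_measurable_times meas_invF[OF fin] mF mc)
  have dm: "(\<lambda>z. det_on S (F (fst z))) \<in> borel_measurable ?P" by (intro meas_det_on mF)
  have mE: "E \<in> borel_measurable ?P" unfolding E_def using q dm by measurable
  have eq: "gauss_density S (F (fst z)) (snd z) = E z" if "z \<in> space ?P" for z
  proof -
    have "fst z \<in> space N" using that by (auto simp: space_pair_measure)
    hence "inv_on S (F (fst z)) = invF S (F (fst z))" using d inv_on_eq[OF fin] by auto
    thus ?thesis unfolding gauss_density_def E_def by simp
  qed
  have "(\<lambda>z. gauss_density S (F (fst z)) (snd z)) \<in> borel_measurable ?P \<longleftrightarrow> E \<in> borel_measurable ?P"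
    by (rule measurable_cong) (rule eq)
  thus ?thesis using mE by simp
qed

lemma meas_gd_joint:
  assumes fin: "finite V" and S: "S \<subseteq> V" and d: "\<forall>\<phi>\<in>space N. det_on S (F \<phi>) \<noteq> 0"
    and m: "\<And>i j. (\<lambda>\<phi>. F \<phi> i j) \<in> borel_measurable N"
  shows "(\<lambda>z. ennreal (gd V S (F (fst z)) (snd z))) \<in> borel_measurable (N \<Otimes>\<^sub>M PiM V (\<lambda>_. lborel))"
proof -
  have finS: "finite S" using fin S finite_subset by blast
  have "(\<lambda>z. \<Prod>i\<in>V - S. std_normal_density (snd z i)) \<in> borel_measurable (N \<Otimes>\<^sub>M PiM V (\<lambda>_. lborel))"
    by (rule measurable_compose[OF measurable_snd meas_stdprod]) auto
  thus ?thesis unfolding gd_def using meas_gauss_joint[OF finS S d m] by measurable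
qed

lemma pw_ineq:
  fixes b :: ennreal
  assumes a: "0 < a" and l: "0 < l"
  shows "ennreal (1/2) * ennreal a + ennreal (1/2 + l/2) * b
         \<le> min (ennreal a) b + ennreal (l/4) * (b^2 * ennreal (1/a)) + ennreal (1/(4*l) + l/4) * ennreal a"
proof (cases b)
  case (real b0)
  have b0: "0 \<le> b0" and bb: "b = ennreal b0" using real by auto
  have ineq: "a/2 + (1/2 + l/2) * b0 \<le> min a b0 + l/4 * (b0^2 * (1/a)) + (1/(4*l) + l/4) * a"
  proof (cases "a \<le> b0")
    case True
    have "min a b0 + l/4 * (b0^2 * (1/a)) + (1/(4*l) + l/4) * a - (a/2 + (1/2 + l/2) * b0)
        = (l * (b0 - a) - a)^2 / (4 * l * a)"
      using True a l by (simp add: min_absorb1 field_simps power2_eq_square)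
    also have "\<dots> \<ge> 0" using a l by simp
    finally show ?thesis by simp
  next
    case False
    have "min a b0 + l/4 * (b0^2 * (1/a)) + (1/(4*l) + l/4) * a - (a/2 + (1/2 + l/2) * b0)
        = (l * (a - b0) - a)^2 / (4 * l * a)"
      using False a l by (simp add: min_absorb2 field_simps power2_eq_square)
    also have "\<dots> \<ge> 0" using a l by simp
    finally show ?thesis by simp
  qed
  have L1: "ennreal (1/2) * ennreal a = ennreal (a/2)"
    by (subst ennreal_mult[symmetric]) (use a in auto)
  have L2: "ennreal (1/2 + l/2) * ennreal b0 = ennreal ((1/2 + l/2) * b0)"
    by (rule ennreal_mult[symmetric]) (use l b0 in auto)
  have L3: "ennreal (a/2) + ennreal ((1/2 + l/2) * b0) = ennreal (a/2 + (1/2 + l/2) * b0)"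
    by (rule ennreal_plus[symmetric]) (use a l b0 in auto)
  have R1: "min (ennreal a) (ennreal b0) = ennreal (min a b0)"
  proof (cases "a \<le> b0")
    case True thus ?thesis using ennreal_leI[OF True] by (simp add: min_absorb1)
  next
    case False hence "b0 \<le> a" by simp
    thus ?thesis using ennreal_leI[OF \<open>b0 \<le> a\<close>] by (simp add: min_absorb2)
  qed
  have R2: "ennreal (l/4) * ((ennreal b0)^2 * ennreal (1/a)) = ennreal (l/4 * (b0^2 * (1/a)))"
  proof -
    have "(ennreal b0)^2 = ennreal (b0^2)" by (rule ennreal_power[OF b0])
    moreover have "ennreal (b0^2) * ennreal (1/a) = ennreal (b0^2 * (1/a))"
      by (rule ennreal_mult[symmetric]) (use a in auto)
    moreover have "ennreal (l/4) * ennreal (b0^2 * (1/a)) = ennreal (l/4 * (b0^2 * (1/a)))"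
      by (rule ennreal_mult[symmetric]) (use a l in auto)
    ultimately show ?thesis by simp
  qed
  have R3: "ennreal (1/(4*l) + l/4) * ennreal a = ennreal ((1/(4*l) + l/4) * a)"
    by (rule ennreal_mult[symmetric]) (use a l in auto)
  have R4: "ennreal (min a b0) + ennreal (l/4 * (b0^2 * (1/a))) + ennreal ((1/(4*l) + l/4) * a)
      = ennreal (min a b0 + l/4 * (b0^2 * (1/a)) + (1/(4*l) + l/4) * a)"
  proof -
    have "ennreal (min a b0 + l/4 * (b0^2 * (1/a)) + (1/(4*l) + l/4) * a)
        = ennreal (min a b0 + l/4 * (b0^2 * (1/a))) + ennreal ((1/(4*l) + l/4) * a)"
      by (rule ennreal_plus) (use a l b0 in auto)
    also have "ennreal (min a b0 + l/4 * (b0^2 * (1/a))) = ennreal (min a b0) + ennreal (l/4 * (b0^2 * (1/a)))"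
      by (rule ennreal_plus) (use a l b0 in auto)
    finally show ?thesis by simp
  qed
  have "ennreal (1/2) * ennreal a + ennreal (1/2 + l/2) * b = ennreal (a/2 + (1/2 + l/2) * b0)"
    unfolding bb L1 L2 L3 ..
  also have "\<dots> \<le> ennreal (min a b0 + l/4 * (b0^2 * (1/a)) + (1/(4*l) + l/4) * a)"
    by (rule ennreal_leI[OF ineq])
  also have "\<dots> = min (ennreal a) b + ennreal (l/4) * (b^2 * ennreal (1/a)) + ennreal (1/(4*l) + l/4) * ennreal a"
    unfolding bb R1 R2 R3 R4 ..
  finally show ?thesis .
next
  case top
  have "b^2 * ennreal (1/a) = (Orderings.top::ennreal)" using top a by (simp add: top_power_ennreal)
  hence "ennreal (l/4) * (b^2 * ennreal (1/a)) = (Orderings.top::ennreal)" using l by simp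
  thus ?thesis by simp
qed


lemma final_arith:
  fixes n x0 t0 :: real
  assumes n: "1 \<le> n" and x0: "x0 \<le> 1" and t0: "0 \<le> t0"
    and H: "\<And>l. 0 < l \<Longrightarrow> 1 + l/2 \<le> x0 + l/4 * ((t0 + n*(n-1))/n^2) + 1/(4*l) + l/4"
  shows "n \<le> t0" "1 - sqrt t0 / (2*n) \<le> x0"
proof -
  define c0 where "c0 = (t0 + n*(n-1))/n^2"
  have Hc: "1 + l * (1 - c0) / 4 - 1/(4*l) \<le> x0" if "0 < l" for l
  proof -
    have e1: "l * (1 - c0) / 4 = l/4 - l * c0/4" by (simp add: algebra_simps diff_divide_distrib)
    have e2: "l/4 * c0 = l * c0/4" by simp
    show ?thesis using H[OF that] unfolding c0_def[symmetric] e1 e2 by linarith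
  qed
  have npos: "0 < n" using n by simp
  show tn: "n \<le> t0"
  proof (rule ccontr)
    assume "\<not> n \<le> t0"
    hence lt: "t0 < n" by simp
    define \<delta> where "\<delta> = 1 - c0"
    have de: "\<delta> = (n - t0) / n^2" unfolding \<delta>_def c0_def using npos by (simp add: field_simps power2_eq_square)
    have dpos: "0 < \<delta>" unfolding de using lt npos by simp
    have dle: "\<delta> \<le> 1"
    proof -
      have "n - t0 \<le> n" using t0 by simp
      also have "n \<le> n^2" using n by (simp add: power2_eq_square)
      finally show ?thesis unfolding de using npos by simp
    qed
    have "1 + (2/\<delta>) * \<delta> / 4 - 1/(4*(2/\<delta>)) \<le> x0" using Hc[of "2/\<delta>"] dpos unfolding \<delta>_def by simp
    moreover have "(2/\<delta>) * \<delta> / 4 = 1/2" using dpos by simp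
    moreover have "1/(4*(2/\<delta>)) = \<delta>/8" using dpos by simp
    ultimately have "1 + 1/2 - \<delta>/8 \<le> x0" by simp
    thus False using dle x0 by simp
  qed
  define c where "c = t0 / n^2"
  have cpos: "0 < c" unfolding c_def using tn npos by simp
  define s where "s = sqrt c"
  have spos: "0 < s" unfolding s_def using cpos by simp
  have ss: "s * s = c" unfolding s_def using cpos by simp
  have sval: "s = sqrt t0 / n"
    unfolding s_def c_def using npos by (simp add: real_sqrt_divide)
  have c0e: "1 - c0 = 1/n - c" unfolding c0_def c_def using npos by (simp add: field_simps power2_eq_square)
  have "1 + (1/s) * (1 - c0) / 4 - 1/(4*(1/s)) \<le> x0" using Hc[of "1/s"] spos by simp
  moreover have "(1/s) * (1 - c0) / 4 \<ge> - s/4"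
  proof -
    have "1 - c0 \<ge> - c" unfolding c0e using npos by simp
    hence "(1/s) * (1 - c0) \<ge> (1/s) * (- c)" using spos by (intro mult_left_mono) auto
    moreover have "(1/s) * (- c) = - s" using spos ss by (simp add: field_simps)
    ultimately show ?thesis by simp
  qed
  moreover have "1/(4*(1/s)) = s/4" using spos by simp
  ultimately have "1 - s/2 \<le> x0" by simp
  thus "1 - sqrt t0 / (2*n) \<le> x0" unfolding sval by simp
qed


theorem proposition2p1:
  fixes m d :: nat and C :: "nat list set set" and \<pi> :: "'p measure"
    and \<Gamma> :: "'p \<Rightarrow> nat list \<Rightarrow> nat list \<Rightarrow> real" and t :: real
  assumes "finite C" and "C \<noteq> {}"
    and "\<forall>S\<in>C. S \<subseteq> grid m d \<and> S \<noteq> {}"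
    and "disjoint C"
    and "prob_space \<pi>"
    and "\<forall>\<phi>\<in>space \<pi>. covariance_matrix (grid m d) (\<Gamma> \<phi>)"
    and "\<forall>\<phi>\<in>space \<pi>. \<forall>S. S \<subseteq> grid m d \<longrightarrow> det_on S (\<Gamma> \<phi>) \<noteq> 0"
    and "\<forall>i j. (\<lambda>\<phi>. \<Gamma> \<phi> i j) \<in> borel_measurable \<pi>"
    and "(\<Sum>S\<in>C. V_term S \<pi> \<Gamma>) = ennreal t"
  shows "ennreal (1 - sqrt t / (2 * real (card C))) \<le> bayes_risk (grid m d) C \<pi> \<Gamma>"
proof -
  define V where "V = grid m d"
  have finV: "finite V"
  proof -
    have "V \<subseteq> {xs. set xs \<subseteq> {1..m} \<and> length xs = d}" unfolding V_def grid_def by auto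
    moreover have "finite {xs. set xs \<subseteq> {1..m} \<and> length xs = d}" by (rule finite_lists_length_eq) simp
    ultimately show ?thesis by (rule finite_subset)
  qed
  interpret P: prob_space \<pi> by (rule assms(5))
  define M where "M = PiM V (\<lambda>_::nat list. (lborel::real measure))"
  define n where "n = card C"
  have npos: "0 < n" using assms(1,2) unfolding n_def by (simp add: card_gt_0_iff)
  define w where "w = ennreal (1 / real n)"
  have SV: "\<And>S. S \<in> C \<Longrightarrow> S \<subseteq> V" using assms(3) unfolding V_def by auto
  have cov: "\<And>\<phi>. \<phi> \<in> space \<pi> \<Longrightarrow> covariance_matrix V (\<Gamma> \<phi>)" using assms(6) unfolding V_def by auto
  have det: "\<And>\<phi> S. \<phi> \<in> space \<pi> \<Longrightarrow> S \<in> C \<Longrightarrow> det_on S (\<Gamma> \<phi>) \<noteq> 0"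
    using assms(7) SV unfolding V_def by auto
  have m\<Gamma>: "\<And>i j. (\<lambda>\<phi>. \<Gamma> \<phi> i j) \<in> borel_measurable \<pi>" using assms(8) by auto
  define F where "F = (\<lambda>S \<phi> x. ennreal (gd V S (\<Gamma> \<phi>) x))"
  have JM: "(\<lambda>z. F S (fst z) (snd z)) \<in> borel_measurable (\<pi> \<Otimes>\<^sub>M M)" if S: "S \<in> C" for S
    unfolding M_def F_def by (rule meas_gd_joint[OF finV SV[OF S]]) (auto simp: det S m\<Gamma>)
  have JM': "(\<lambda>z. F S (snd z) (fst z)) \<in> borel_measurable (M \<Otimes>\<^sub>M \<pi>)" if S: "S \<in> C" for S
  proof -
    have "(\<lambda>z. (snd z, fst z)) \<in> measurable (M \<Otimes>\<^sub>M \<pi>) (\<pi> \<Otimes>\<^sub>M M)" by measurable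
    from measurable_compose[OF this JM[OF S]] show ?thesis by simp
  qed
  have sfM: "sigma_finite_measure M" unfolding M_def by (rule product_sigma_finite.sigma_finite[OF psf finV])
  have sf\<pi>: "sigma_finite_measure \<pi>" by (rule prob_space_imp_sigma_finite[OF assms(5)])
  interpret PM: pair_sigma_finite \<pi> M by (intro pair_sigma_finite.intro sf\<pi> sfM)
  have mx: "(\<lambda>x. F S \<phi> x) \<in> borel_measurable M" if S: "S \<in> C" for S \<phi>
    unfolding F_def gd_def M_def using meas_gauss_density[of S V] meas_stdprod[of "V - S" V] SV[OF S] by measurable
  have m\<phi>: "(\<lambda>\<phi>. F S \<phi> x) \<in> borel_measurable \<pi>" if S: "S \<in> C" and x: "x \<in> space M" for S x
    using measurable_compose[OF measurable_Pair2'[OF x] JM[OF S]] by simp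
  have mp0: "(\<lambda>x. p0 V x) \<in> borel_measurable M" unfolding p0_def M_def by (rule meas_stdprod) simp
  define a where "a = (\<lambda>S x. \<integral>\<^sup>+\<phi>. F S \<phi> x \<partial>\<pi>)"
  define hh where "hh = (\<lambda>x. \<Sum>S\<in>C. w * a S x)"
  have mA: "a S \<in> borel_measurable M" if S: "S \<in> C" for S
    unfolding a_def using P.borel_measurable_nn_integral_fst[OF JM'[OF S]] by simp
  have mh: "hh \<in> borel_measurable M" unfolding hh_def using mA by measurable
  have intA: "(\<integral>\<^sup>+x. a S x \<partial>M) = 1" if S: "S \<in> C" for S
  proof -
    have "(\<integral>\<^sup>+x. a S x \<partial>M) = (\<integral>\<^sup>+\<phi>. (\<integral>\<^sup>+x. F S \<phi> x \<partial>M) \<partial>\<pi>)"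
      unfolding a_def by (rule PM.Fubini') (use JM[OF S] in \<open>simp add: case_prod_beta'\<close>)
    also have "\<dots> = (\<integral>\<^sup>+\<phi>. 1 \<partial>\<pi>)"
      by (intro nn_integral_cong) (simp add: F_def M_def gd_int_V[OF cov finV SV[OF S] det[OF _ S]])
    also have "\<dots> = 1" by (simp add: P.emeasure_space_1)
    finally show ?thesis .
  qed
  have inth: "(\<integral>\<^sup>+x. hh x \<partial>M) = 1"
  proof -
    have "(\<integral>\<^sup>+x. hh x \<partial>M) = (\<Sum>S\<in>C. \<integral>\<^sup>+x. w * a S x \<partial>M)"
      unfolding hh_def by (rule nn_integral_sum) (use mA in measurable)
    also have "\<dots> = (\<Sum>S\<in>C. w)" by (intro sum.cong refl) (simp add: nn_integral_cmult mA intA)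
    also have "\<dots> = of_nat n * w" unfolding n_def by simp
    also have "\<dots> = 1" unfolding w_def using npos by (simp add: ennreal_of_nat_eq_real_of_nat ennreal_mult[symmetric])
    finally show ?thesis .
  qed
  have intp: "(\<integral>\<^sup>+x. ennreal (p0 V x) \<partial>M) = 1" unfolding p0_def M_def by (rule std_prod_int[OF finV])
  have risk: "(\<integral>\<^sup>+x. min (ennreal (p0 V x)) (hh x) \<partial>M) \<le> emeasure (null_law V) {x \<in> space (null_law V). f x}
        + (\<Sum>S\<in>C. ennreal (1 / real (card C)) * (\<integral>\<^sup>+ \<phi>. emeasure (alt_law V S (\<Gamma> \<phi>)) {x \<in> space (alt_law V S (\<Gamma> \<phi>)). \<not> f x} \<partial>\<pi>))"
    if f: "f \<in> tests V" for f
  proof -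
    have fm: "f \<in> measurable M (count_space UNIV)" using f unfolding tests_def M_def by simp
    define A where "A = {x \<in> space M. f x}"
    define A' where "A' = {x \<in> space M. \<not> f x}"
    have "f -` {True} \<inter> space M \<in> sets M" by (rule measurable_sets[OF fm]) simp
    moreover have "A = f -` {True} \<inter> space M" unfolding A_def by auto
    ultimately have Am: "A \<in> sets M" by simp
    have "f -` {False} \<inter> space M \<in> sets M" by (rule measurable_sets[OF fm]) simp
    moreover have "A' = f -` {False} \<inter> space M" unfolding A'_def by auto
    ultimately have A'm: "A' \<in> sets M" by simp
    have nl: "null_law V = density M (\<lambda>x. ennreal (p0 V x))" unfolding null_law_def M_def p0_def ..
    have null: "emeasure (null_law V) {x \<in> space (null_law V). f x} = (\<integral>\<^sup>+x. ennreal (p0 V x) * indicator A x \<partial>M)"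
      unfolding nl A_def by (subst emeasure_density) (use mp0 Am[unfolded A_def] in auto)
    have alt: "emeasure (alt_law V S (\<Gamma> \<phi>)) {x \<in> space (alt_law V S (\<Gamma> \<phi>)). \<not> f x} = (\<integral>\<^sup>+x. F S \<phi> x * indicator A' x \<partial>M)"
      if S: "S \<in> C" for S \<phi>
    proof -
      have al: "alt_law V S (\<Gamma> \<phi>) = density M (F S \<phi>)" unfolding alt_law_def M_def F_def gd_def ..
      show ?thesis unfolding al A'_def by (subst emeasure_density) (use mx[OF S] A'm[unfolded A'_def] in auto)
    qed
    define G where "G = (\<lambda>x. \<Sum>S\<in>C. w * (\<integral>\<^sup>+\<phi>. F S \<phi> x * indicator A' x \<partial>\<pi>))"
    have mG1: "(\<lambda>x. \<integral>\<^sup>+\<phi>. F S \<phi> x * indicator A' x \<partial>\<pi>) \<in> borel_measurable M" if S: "S \<in> C" for S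
    proof -
      have "(\<lambda>z. F S (snd z) (fst z) * indicator A' (fst z)) \<in> borel_measurable (M \<Otimes>\<^sub>M \<pi>)"
        using JM'[OF S] A'm by measurable
      from P.borel_measurable_nn_integral_fst[OF this] show ?thesis by simp
    qed
    have mG: "G \<in> borel_measurable M" unfolding G_def using mG1 by measurable
    have "(\<Sum>S\<in>C. ennreal (1 / real (card C)) * (\<integral>\<^sup>+ \<phi>. emeasure (alt_law V S (\<Gamma> \<phi>)) {x \<in> space (alt_law V S (\<Gamma> \<phi>)). \<not> f x} \<partial>\<pi>))
        = (\<Sum>S\<in>C. w * (\<integral>\<^sup>+x. (\<integral>\<^sup>+\<phi>. F S \<phi> x * indicator A' x \<partial>\<pi>) \<partial>M))"
    proof (intro sum.cong refl)
      fix S assume S: "S \<in> C"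
      have "(\<integral>\<^sup>+ \<phi>. emeasure (alt_law V S (\<Gamma> \<phi>)) {x \<in> space (alt_law V S (\<Gamma> \<phi>)). \<not> f x} \<partial>\<pi>)
          = (\<integral>\<^sup>+\<phi>. (\<integral>\<^sup>+x. F S \<phi> x * indicator A' x \<partial>M) \<partial>\<pi>)"
        by (intro nn_integral_cong) (simp add: alt[OF S])
      also have "\<dots> = (\<integral>\<^sup>+x. (\<integral>\<^sup>+\<phi>. F S \<phi> x * indicator A' x \<partial>\<pi>) \<partial>M)"
      proof (rule PM.Fubini'[symmetric])
        show "(\<lambda>(\<phi>, x). F S \<phi> x * indicator A' x) \<in> borel_measurable (\<pi> \<Otimes>\<^sub>M M)"
          using JM[OF S] A'm by (simp add: case_prod_beta') measurable
      qed
      finally show "ennreal (1 / real (card C)) * (\<integral>\<^sup>+ \<phi>. emeasure (alt_law V S (\<Gamma> \<phi>)) {x \<in> space (alt_law V S (\<Gamma> \<phi>)). \<not> f x} \<partial>\<pi>)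
          = w * (\<integral>\<^sup>+x. (\<integral>\<^sup>+\<phi>. F S \<phi> x * indicator A' x \<partial>\<pi>) \<partial>M)" unfolding w_def n_def by simp
    qed
    also have "\<dots> = (\<integral>\<^sup>+x. G x \<partial>M)"
    proof -
      have "(\<integral>\<^sup>+x. G x \<partial>M) = (\<Sum>S\<in>C. \<integral>\<^sup>+x. w * (\<integral>\<^sup>+\<phi>. F S \<phi> x * indicator A' x \<partial>\<pi>) \<partial>M)"
        unfolding G_def by (rule nn_integral_sum) (use mG1 in measurable)
      also have "\<dots> = (\<Sum>S\<in>C. w * (\<integral>\<^sup>+x. (\<integral>\<^sup>+\<phi>. F S \<phi> x * indicator A' x \<partial>\<pi>) \<partial>M))"
        by (intro sum.cong refl nn_integral_cmult mG1)
      finally show ?thesis by simp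
    qed
    finally have alts: "(\<Sum>S\<in>C. ennreal (1 / real (card C)) * (\<integral>\<^sup>+ \<phi>. emeasure (alt_law V S (\<Gamma> \<phi>)) {x \<in> space (alt_law V S (\<Gamma> \<phi>)). \<not> f x} \<partial>\<pi>))
        = (\<integral>\<^sup>+x. G x \<partial>M)" .
    have "(\<integral>\<^sup>+x. min (ennreal (p0 V x)) (hh x) \<partial>M) \<le> (\<integral>\<^sup>+x. ennreal (p0 V x) * indicator A x + G x \<partial>M)"
    proof (rule nn_integral_mono)
      fix x assume x: "x \<in> space M"
      show "min (ennreal (p0 V x)) (hh x) \<le> ennreal (p0 V x) * indicator A x + G x"
      proof (cases "f x")
        case True
        hence "x \<in> A" using x unfolding A_def by simp
        hence "ennreal (p0 V x) \<le> ennreal (p0 V x) * indicator A x + G x" by simp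
        thus ?thesis by (rule order.trans[OF min.cobounded1])
      next
        case False
        hence "x \<in> A'" using x unfolding A'_def by simp
        hence Gh: "G x = hh x" unfolding G_def hh_def a_def by simp
        have h2: "hh x \<le> ennreal (p0 V x) * indicator A x + hh x" by (rule add_increasing) auto
        show ?thesis unfolding Gh by (rule order.trans[OF min.cobounded2 h2])
      qed
    qed
    also have "\<dots> = (\<integral>\<^sup>+x. ennreal (p0 V x) * indicator A x \<partial>M) + (\<integral>\<^sup>+x. G x \<partial>M)"
      by (rule nn_integral_add) (use mp0 Am mG in measurable)
    finally show ?thesis unfolding null alts .
  qed
  define q where "q = (\<lambda>x. ennreal (1 / p0 V x))"
  have mq: "q \<in> borel_measurable M" unfolding q_def using mp0 by measurable
  define PP where "PP = \<pi> \<Otimes>\<^sub>M \<pi>"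
  have PP1: "emeasure PP (space PP) = 1"
    unfolding PP_def space_pair_measure by (simp add: P.emeasure_pair_measure_Times P.emeasure_space_1)
  have sfPP: "sigma_finite_measure PP" by (rule prob_space_imp_sigma_finite) (rule prob_spaceI[OF PP1])
  interpret PPM: pair_sigma_finite PP M by (intro pair_sigma_finite.intro sfPP sfM)
  have T1: "a S x * a S' x = (\<integral>\<^sup>+z. F S (fst z) x * F S' (snd z) x \<partial>PP)"
    if S: "S \<in> C" and S': "S' \<in> C" and x: "x \<in> space M" for S S' x
  proof -
    have "a S x * a S' x = (\<integral>\<^sup>+\<phi>1. F S \<phi>1 x * a S' x \<partial>\<pi>)"
      unfolding a_def by (rule nn_integral_multc[symmetric]) (rule m\<phi>[OF S x])
    also have "\<dots> = (\<integral>\<^sup>+\<phi>1. (\<integral>\<^sup>+\<phi>2. F S \<phi>1 x * F S' \<phi>2 x \<partial>\<pi>) \<partial>\<pi>)"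
      unfolding a_def by (intro nn_integral_cong nn_integral_cmult[symmetric] m\<phi>[OF S' x])
    also have "\<dots> = (\<integral>\<^sup>+z. F S (fst z) x * F S' (snd z) x \<partial>PP)"
    proof -
      have "(\<lambda>z. F S (fst z) x * F S' (snd z) x) \<in> borel_measurable (\<pi> \<Otimes>\<^sub>M \<pi>)"
        using measurable_compose[OF measurable_fst m\<phi>[OF S x]] measurable_compose[OF measurable_snd m\<phi>[OF S' x]]
        by measurable
      from P.nn_integral_fst[OF this] show ?thesis unfolding PP_def by simp
    qed
    finally show ?thesis .
  qed
  have T2: "hh x ^ 2 = (\<Sum>S\<in>C. \<Sum>S'\<in>C. w * w * (a S x * a S' x))" for x
  proof -
    have "hh x ^ 2 = (\<Sum>S\<in>C. w * a S x) * (\<Sum>S'\<in>C. w * a S' x)" unfolding hh_def power2_eq_square ..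
    also have "\<dots> = (\<Sum>S\<in>C. \<Sum>S'\<in>C. (w * a S x) * (w * a S' x))" by (rule sum_product)
    also have "\<dots> = (\<Sum>S\<in>C. \<Sum>S'\<in>C. w * w * (a S x * a S' x))" by (simp add: mult_ac)
    finally show ?thesis .
  qed
  define K where "K = (\<lambda>S S' z. \<integral>\<^sup>+x. F S (fst z) x * F S' (snd z) x * q x \<partial>M)"
  have T3: "(\<integral>\<^sup>+x. a S x * a S' x * q x \<partial>M) = (\<integral>\<^sup>+z. K S S' z \<partial>PP)" if S: "S \<in> C" and S': "S' \<in> C" for S S'
  proof -
    have "(\<integral>\<^sup>+x. a S x * a S' x * q x \<partial>M) = (\<integral>\<^sup>+x. (\<integral>\<^sup>+z. F S (fst z) x * F S' (snd z) x * q x \<partial>PP) \<partial>M)"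
    proof (rule nn_integral_cong)
      fix x assume x: "x \<in> space M"
      have m: "(\<lambda>z. F S (fst z) x * F S' (snd z) x) \<in> borel_measurable PP"
        unfolding PP_def
        using measurable_compose[OF measurable_fst m\<phi>[OF S x]] measurable_compose[OF measurable_snd m\<phi>[OF S' x]]
        by measurable
      show "a S x * a S' x * q x = (\<integral>\<^sup>+z. F S (fst z) x * F S' (snd z) x * q x \<partial>PP)"
        unfolding T1[OF S S' x] by (rule nn_integral_multc[symmetric, OF m])
    qed
    also have "\<dots> = (\<integral>\<^sup>+z. K S S' z \<partial>PP)" unfolding K_def
    proof (rule PPM.Fubini')
      have g: "(\<lambda>u. (fst (fst u), snd u)) \<in> measurable (PP \<Otimes>\<^sub>M M) (\<pi> \<Otimes>\<^sub>M M)" unfolding PP_def by measurable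
      have g': "(\<lambda>u. (snd (fst u), snd u)) \<in> measurable (PP \<Otimes>\<^sub>M M) (\<pi> \<Otimes>\<^sub>M M)" unfolding PP_def by measurable
      have m1: "(\<lambda>u. F S (fst (fst u)) (snd u)) \<in> borel_measurable (PP \<Otimes>\<^sub>M M)"
        using measurable_compose[OF g JM[OF S]] by simp
      have m2: "(\<lambda>u. F S' (snd (fst u)) (snd u)) \<in> borel_measurable (PP \<Otimes>\<^sub>M M)"
        using measurable_compose[OF g' JM[OF S']] by simp
      have m3: "(\<lambda>u. q (snd u)) \<in> borel_measurable (PP \<Otimes>\<^sub>M M)"
        using measurable_compose[OF measurable_snd[of PP M] mq] by simp
      have "(\<lambda>u. F S (fst (fst u)) (snd u) * F S' (snd (fst u)) (snd u) * q (snd u)) \<in> borel_measurable (PP \<Otimes>\<^sub>M M)"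
        using m1 m2 m3 by measurable
      thus "(\<lambda>(z, x). F S (fst z) x * F S' (snd z) x * q x) \<in> borel_measurable (PP \<Otimes>\<^sub>M M)"
        by (simp add: case_prod_beta')
    qed
    finally show ?thesis .
  qed
  have zsp: "fst z \<in> space \<pi>" "snd z \<in> space \<pi>" if "z \<in> space PP" for z
    using that unfolding PP_def space_pair_measure by auto
  have Kdiff: "K S S' z = 1" if S: "S \<in> C" and S': "S' \<in> C" and ne: "S \<noteq> S'" and z: "z \<in> space PP" for S S' z
  proof -
    have disj: "S \<inter> S' = {}" by (rule disjointD[OF assms(4) S S' ne])
    show ?thesis unfolding K_def F_def q_def M_def
      by (rule K_diff[OF cov[OF zsp(1)[OF z]] cov[OF zsp(2)[OF z]] finV SV[OF S] SV[OF S'] disj det[OF zsp(1)[OF z] S] det[OF zsp(2)[OF z] S']])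
  qed
  define Vint where "Vint = (\<lambda>S z. let B1 = inv_on S (\<Gamma> (fst z)); B2 = inv_on S (\<Gamma> (snd z));
           Q = (\<lambda>i j. B1 i j + B2 i j - (if i = j then 1 else 0))
       in if pos_def_on S Q then ennreal (sqrt (det_on S B1 * det_on S B2 / det_on S Q)) else \<infinity>)"
  have Vt: "V_term S \<pi> \<Gamma> = (\<integral>\<^sup>+z. Vint S z \<partial>PP)" for S unfolding V_term_def Vint_def PP_def ..
  have Ksame: "K S S z \<le> Vint S z" if S: "S \<in> C" and z: "z \<in> space PP" for S z
  proof (cases "pos_def_on S (\<lambda>i j. inv_on S (\<Gamma> (fst z)) i j + inv_on S (\<Gamma> (snd z)) i j - (if i = j then 1 else 0))")
    case True
    have "K S S z = ennreal (sqrt (det_on S (inv_on S (\<Gamma> (fst z))) * det_on S (inv_on S (\<Gamma> (snd z)))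
          / det_on S (\<lambda>i j. inv_on S (\<Gamma> (fst z)) i j + inv_on S (\<Gamma> (snd z)) i j - (if i = j then 1 else 0))))"
      unfolding K_def F_def q_def M_def
      by (rule K_same[OF cov[OF zsp(1)[OF z]] cov[OF zsp(2)[OF z]] finV SV[OF S] det[OF zsp(1)[OF z] S] det[OF zsp(2)[OF z] S] refl True])
    thus ?thesis using True unfolding Vint_def Let_def by simp
  next
    case False thus ?thesis unfolding Vint_def Let_def by simp
  qed
  have intKd: "(\<integral>\<^sup>+z. K S S' z \<partial>PP) = 1" if S: "S \<in> C" and S': "S' \<in> C" and ne: "S \<noteq> S'" for S S'
  proof -
    have "(\<integral>\<^sup>+z. K S S' z \<partial>PP) = (\<integral>\<^sup>+z. 1 \<partial>PP)" by (intro nn_integral_cong) (simp add: Kdiff[OF S S' ne])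
    also have "\<dots> = 1" using PP1 by simp
    finally show ?thesis .
  qed
  have intKs: "(\<integral>\<^sup>+z. K S S z \<partial>PP) \<le> V_term S \<pi> \<Gamma>" if S: "S \<in> C" for S
    unfolding Vt by (intro nn_integral_mono Ksame[OF S])
  have T: "(\<integral>\<^sup>+x. hh x ^ 2 * q x \<partial>M) \<le> w * w * (ennreal t + of_nat (n * (n - 1)))"
  proof -
    have mAA: "(\<lambda>x. w * w * (a S x * a S' x * q x)) \<in> borel_measurable M" if "S \<in> C" "S' \<in> C" for S S'
      using mA[OF that(1)] mA[OF that(2)] mq by measurable
    have "(\<integral>\<^sup>+x. hh x ^ 2 * q x \<partial>M) = (\<integral>\<^sup>+x. (\<Sum>S\<in>C. \<Sum>S'\<in>C. w * w * (a S x * a S' x * q x)) \<partial>M)"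
      by (intro nn_integral_cong) (simp add: T2 sum_distrib_right mult.assoc)
    also have "\<dots> = (\<Sum>S\<in>C. \<integral>\<^sup>+x. (\<Sum>S'\<in>C. w * w * (a S x * a S' x * q x)) \<partial>M)"
      by (rule nn_integral_sum) (use mAA in measurable)
    also have "\<dots> = (\<Sum>S\<in>C. \<Sum>S'\<in>C. \<integral>\<^sup>+x. w * w * (a S x * a S' x * q x) \<partial>M)"
      by (intro sum.cong refl nn_integral_sum mAA)
    also have "\<dots> = (\<Sum>S\<in>C. \<Sum>S'\<in>C. w * w * (\<integral>\<^sup>+z. K S S' z \<partial>PP))"
    proof (intro sum.cong refl)
      fix S S' assume S: "S \<in> C" and S': "S' \<in> C"
      have "(\<integral>\<^sup>+x. w * w * (a S x * a S' x * q x) \<partial>M) = w * w * (\<integral>\<^sup>+x. a S x * a S' x * q x \<partial>M)"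
        by (rule nn_integral_cmult) (use mA[OF S] mA[OF S'] mq in measurable)
      thus "(\<integral>\<^sup>+x. w * w * (a S x * a S' x * q x) \<partial>M) = w * w * (\<integral>\<^sup>+z. K S S' z \<partial>PP)"
        using T3[OF S S'] by simp
    qed
    also have "\<dots> \<le> (\<Sum>S\<in>C. w * w * (V_term S \<pi> \<Gamma> + of_nat (n - 1)))"
    proof (rule sum_mono)
      fix S assume S: "S \<in> C"
      have "(\<Sum>S'\<in>C. w * w * (\<integral>\<^sup>+z. K S S' z \<partial>PP)) = w * w * (\<integral>\<^sup>+z. K S S z \<partial>PP) + (\<Sum>S'\<in>C - {S}. w * w * (\<integral>\<^sup>+z. K S S' z \<partial>PP))"
        by (rule sum.remove[OF assms(1) S])
      also have "(\<Sum>S'\<in>C - {S}. w * w * (\<integral>\<^sup>+z. K S S' z \<partial>PP)) = (\<Sum>S'\<in>C - {S}. w * w)"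
      proof (intro sum.cong refl)
        fix S' assume "S' \<in> C - {S}"
        hence S': "S' \<in> C" and ne: "S \<noteq> S'" by auto
        show "w * w * (\<integral>\<^sup>+z. K S S' z \<partial>PP) = w * w" by (simp add: intKd[OF S S' ne])
      qed
      also have "\<dots> = w * w * of_nat (n - 1)" using S assms(1) unfolding n_def by (simp add: card_Diff_singleton mult.commute)
      also have "w * w * (\<integral>\<^sup>+z. K S S z \<partial>PP) \<le> w * w * V_term S \<pi> \<Gamma>"
        by (intro mult_left_mono intKs[OF S]) simp
      finally show "(\<Sum>S'\<in>C. w * w * (\<integral>\<^sup>+z. K S S' z \<partial>PP)) \<le> w * w * (V_term S \<pi> \<Gamma> + of_nat (n - 1))"
        by (simp add: distrib_left)
    qed
    also have "\<dots> = w * w * ((\<Sum>S\<in>C. V_term S \<pi> \<Gamma>) + of_nat n * of_nat (n - 1))"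
      unfolding n_def by (simp add: sum.distrib sum_distrib_left distrib_left mult_ac)
    also have "\<dots> = w * w * (ennreal t + of_nat (n * (n - 1)))" unfolding assms(9) by simp
    finally show ?thesis .
  qed
  define X where "X = (\<integral>\<^sup>+x. min (ennreal (p0 V x)) (hh x) \<partial>M)"
  define TT where "TT = (\<integral>\<^sup>+x. hh x ^ 2 * q x \<partial>M)"
  have mmin: "(\<lambda>x. min (ennreal (p0 V x)) (hh x)) \<in> borel_measurable M" using mp0 mh by measurable
  have mT: "(\<lambda>x. hh x ^ 2 * q x) \<in> borel_measurable M" using mh mq by measurable
  have Xle: "X \<le> 1"
  proof -
    have "X \<le> (\<integral>\<^sup>+x. ennreal (p0 V x) \<partial>M)" unfolding X_def by (intro nn_integral_mono) simp
    thus ?thesis using intp by simp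
  qed
  have key: "ennreal (1/2) + ennreal (1/2 + l/2) \<le> X + ennreal (l/4) * TT + ennreal (1/(4*l) + l/4)" if l: "0 < l" for l
  proof -
    have "ennreal (1/2) + ennreal (1/2 + l/2) = (\<integral>\<^sup>+x. ennreal (1/2) * ennreal (p0 V x) + ennreal (1/2 + l/2) * hh x \<partial>M)"
    proof -
      have "(\<integral>\<^sup>+x. ennreal (1/2) * ennreal (p0 V x) + ennreal (1/2 + l/2) * hh x \<partial>M)
          = (\<integral>\<^sup>+x. ennreal (1/2) * ennreal (p0 V x) \<partial>M) + (\<integral>\<^sup>+x. ennreal (1/2 + l/2) * hh x \<partial>M)"
        by (rule nn_integral_add) (use mp0 mh in measurable)
      also have "\<dots> = ennreal (1/2) * (\<integral>\<^sup>+x. ennreal (p0 V x) \<partial>M) + ennreal (1/2 + l/2) * (\<integral>\<^sup>+x. hh x \<partial>M)"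
        using mp0 mh by (simp add: nn_integral_cmult)
      finally show ?thesis using intp inth by simp
    qed
    also have "\<dots> \<le> (\<integral>\<^sup>+x. min (ennreal (p0 V x)) (hh x) + ennreal (l/4) * (hh x ^ 2 * ennreal (1 / p0 V x)) + ennreal (1/(4*l) + l/4) * ennreal (p0 V x) \<partial>M)"
      by (intro nn_integral_mono pw_ineq p0_pos l)
    also have "\<dots> = X + ennreal (l/4) * TT + ennreal (1/(4*l) + l/4)"
    proof -
      have "(\<integral>\<^sup>+x. min (ennreal (p0 V x)) (hh x) + ennreal (l/4) * (hh x ^ 2 * ennreal (1 / p0 V x)) + ennreal (1/(4*l) + l/4) * ennreal (p0 V x) \<partial>M)
          = (\<integral>\<^sup>+x. min (ennreal (p0 V x)) (hh x) + ennreal (l/4) * (hh x ^ 2 * ennreal (1 / p0 V x)) \<partial>M) + (\<integral>\<^sup>+x. ennreal (1/(4*l) + l/4) * ennreal (p0 V x) \<partial>M)"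
        by (rule nn_integral_add) (use mp0 mh mq[unfolded q_def] in measurable)
      also have "(\<integral>\<^sup>+x. min (ennreal (p0 V x)) (hh x) + ennreal (l/4) * (hh x ^ 2 * ennreal (1 / p0 V x)) \<partial>M)
          = X + (\<integral>\<^sup>+x. ennreal (l/4) * (hh x ^ 2 * ennreal (1 / p0 V x)) \<partial>M)"
        unfolding X_def by (rule nn_integral_add) (use mp0 mh mq[unfolded q_def] in measurable)
      also have "(\<integral>\<^sup>+x. ennreal (l/4) * (hh x ^ 2 * ennreal (1 / p0 V x)) \<partial>M) = ennreal (l/4) * TT"
        unfolding TT_def q_def by (rule nn_integral_cmult) (use mh mq[unfolded q_def] in measurable)
      also have "(\<integral>\<^sup>+x. ennreal (1/(4*l) + l/4) * ennreal (p0 V x) \<partial>M) = ennreal (1/(4*l) + l/4)"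
        using intp mp0 by (simp add: nn_integral_cmult)
      finally show ?thesis .
    qed
    finally show ?thesis .
  qed
  define t0 where "t0 = max t 0"
  have t0: "0 \<le> t0" unfolding t0_def by simp
  have et: "ennreal t = ennreal t0" unfolding t0_def by (simp add: ennreal_max_0)
  define nr where "nr = real n"
  have nr: "1 \<le> nr" unfolding nr_def using npos by simp
  define c0 where "c0 = (t0 + nr * (nr - 1)) / nr^2"
  have c0: "0 \<le> c0" unfolding c0_def using t0 nr by simp
  have TTle: "TT \<le> ennreal c0"
  proof -
    have "TT \<le> w * w * (ennreal t + of_nat (n * (n - 1)))" unfolding TT_def by (rule T)
    also have "w * w * (ennreal t + of_nat (n * (n - 1))) = ennreal c0"
    proof -
      have "of_nat (n * (n - 1)) = ennreal (nr * (nr - 1))" unfolding nr_def using npos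
        by (simp add: ennreal_of_nat_eq_real_of_nat of_nat_diff)
      hence e1: "ennreal t + of_nat (n * (n - 1)) = ennreal (t0 + nr * (nr - 1))"
        unfolding et using t0 nr by (simp add: ennreal_plus)
      have e2: "w * w = ennreal (1 / nr^2)" unfolding w_def nr_def
        by (simp add: ennreal_mult[symmetric] power2_eq_square)
      have y: "0 \<le> t0 + nr * (nr - 1)" using t0 nr by simp
      have "w * w * (ennreal t + of_nat (n * (n - 1))) = ennreal (1 / nr^2) * ennreal (t0 + nr * (nr - 1))"
        by (simp only: e1 e2)
      also have "\<dots> = ennreal (1 / nr^2 * (t0 + nr * (nr - 1)))" by (rule ennreal_mult[symmetric]) (use y in auto)
      also have "\<dots> = ennreal c0" unfolding c0_def by simp
      finally show ?thesis .
    qed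
    finally show ?thesis .
  qed
  define x0 where "x0 = enn2real X"
  have Xe: "X = ennreal x0" unfolding x0_def using Xle by (cases X) (auto simp: top_unique)
  have x01: "x0 \<le> 1" using Xle unfolding Xe by (simp add: ennreal_le_1)
  have x02: "0 \<le> x0" unfolding x0_def by simp
  note x0 = x01 x02
  have H: "1 + l/2 \<le> x0 + l/4 * ((t0 + nr*(nr-1))/nr^2) + 1/(4*l) + l/4" if l: "0 < l" for l
  proof -
    have "ennreal (1 + l/2) = ennreal (1/2 + (1/2 + l/2))" by simp
    also have "\<dots> = ennreal (1/2) + ennreal (1/2 + l/2)" by (rule ennreal_plus) (use l in auto)
    also have "\<dots> \<le> X + ennreal (l/4) * TT + ennreal (1/(4*l) + l/4)" by (rule key[OF l])
    also have "\<dots> \<le> ennreal x0 + ennreal (l/4) * ennreal c0 + ennreal (1/(4*l) + l/4)"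
      unfolding Xe by (intro add_mono mult_left_mono TTle order.refl) simp
    also have "\<dots> = ennreal (x0 + l/4 * c0 + (1/(4*l) + l/4))"
    proof -
      have "ennreal (l/4) * ennreal c0 = ennreal (l/4 * c0)" by (rule ennreal_mult[symmetric]) (use l c0 in auto)
      moreover have "ennreal (x0 + l/4 * c0 + (1/(4*l) + l/4)) = ennreal (x0 + l/4 * c0) + ennreal (1/(4*l) + l/4)"
        by (rule ennreal_plus) (use l c0 x0 in auto)
      moreover have "ennreal (x0 + l/4 * c0) = ennreal x0 + ennreal (l/4 * c0)"
        by (rule ennreal_plus) (use l c0 x0 in auto)
      ultimately show ?thesis by simp
    qed
    finally have "ennreal (1 + l/2) \<le> ennreal (x0 + l/4 * c0 + (1/(4*l) + l/4))" .
    hence "1 + l/2 \<le> x0 + l/4 * c0 + (1/(4*l) + l/4)"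
      using l x0 c0 by (subst (asm) ennreal_le_iff) auto
    thus ?thesis unfolding c0_def by simp
  qed
  note FA = final_arith[OF nr x0(1) t0 H]
  have tt: "t0 = t" using FA(1) nr unfolding t0_def by auto
  have bnd: "ennreal (1 - sqrt t / (2 * real (card C))) \<le> X"
    unfolding Xe using FA(2) tt unfolding nr_def n_def by (intro ennreal_leI) simp
  have "bayes_risk (grid m d) C \<pi> \<Gamma> = bayes_risk V C \<pi> \<Gamma>" unfolding V_def ..
  also have "ennreal (1 - sqrt t / (2 * real (card C))) \<le> bayes_risk V C \<pi> \<Gamma>"
    unfolding bayes_risk_def
  proof (rule INF_greatest)
    fix f assume "f \<in> tests V"
    from order.trans[OF bnd risk[OF this, folded X_def]]
    show "ennreal (1 - sqrt t / (2 * real (card C))) \<le> emeasure (null_law V) {x \<in> space (null_law V). f x}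
        + (\<Sum>S\<in>C. ennreal (1 / real (card C)) * (\<integral>\<^sup>+ \<phi>. emeasure (alt_law V S (\<Gamma> \<phi>)) {x \<in> space (alt_law V S (\<Gamma> \<phi>)). \<not> f x} \<partial>\<pi>))" .
  qed
  finally show ?thesis .
qed


end
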